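(* Let $\mathcal H$ be a real Hilbert space. Let $\Psi: \mathcal H \to \mathbb R \cup \{+\infty\}$ be proper, lower-semicontinuous and convex, and let $\Phi: \mathcal H \to \mathbb R$ be convex and continuously differentiable with $L$-Lipschitz continuous gradient. Suppose that $S=\operatorname{argmin}(\Psi+\Phi)\neq\emptyset$. Let $\alpha>3$ and $0<s<\frac1L$, let $(g_k)$ be a sequence in $\mathcal H$, and let $(x_k)$ be generated by the inexact scheme: given arbitrary $x_0,x_1\in\mathcal H$, for $k\ge1$, $$y_k = x_k + \frac{k-1}{k+\alpha-1}(x_k-x_{k-1}),\qquad x_{k+1} = \operatorname{prox}_{s\Psi}\big(y_k - s(\nabla\Phi(y_k) - g_k)\big).$$ If $\sum_{k=1}^\infty k\|g_k\|<+\infty$, then $$\lim_{k\to\infty}k^2\Big((\Psi+\Phi)(x_k)-\min(\Psi+\Phi)\Big)=0,\qquad \lim_{k\to\infty}k\|x_{k+1}-x_k\|=0,$$ and $(x_k)$ converges weakly to a point in $S$.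
   Context: $\operatorname{prox}_{s\Psi}(z) = \operatorname{argmin}_{u\in\mathcal H}\{\Psi(u) + \frac{1}{2s}\|u-z\|^2\}$ denotes the proximal operator. *)

theory Defs
  imports "HOL-Analysis.Analysis"
begin

definition proper_fun :: "('a \<Rightarrow> ereal) \<Rightarrow> bool" where
  "proper_fun f \<longleftrightarrow> (\<forall>x. f x \<noteq> -\<infinity>) \<and> (\<exists>x. f x \<noteq> \<infinity>)"

definition lsc_fun :: "('a::topological_space \<Rightarrow> ereal) \<Rightarrow> bool" where
  "lsc_fun f \<longleftrightarrow> (\<forall>x. f x \<le> Liminf (at x) f)"

definition convex_ereal_fun :: "('a::real_vector \<Rightarrow> ereal) \<Rightarrow> bool" where
  "convex_ereal_fun f \<longleftrightarrow>
     (\<forall>x y t. 0 \<le> t \<and> t \<le> 1 \<longrightarrow>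
        f ((1 - t) *\<^sub>R x + t *\<^sub>R y) \<le> ereal (1 - t) * f x + ereal t * f y)"

definition prox :: "real \<Rightarrow> ('a::real_normed_vector \<Rightarrow> ereal) \<Rightarrow> 'a \<Rightarrow> 'a" where
  "prox s f z = (THE u. \<forall>v. f u + ereal (norm (u - z)^2 / (2 * s))
                              \<le> f v + ereal (norm (v - z)^2 / (2 * s)))"

definition weakly_converges :: "(nat \<Rightarrow> 'a::real_inner) \<Rightarrow> 'a \<Rightarrow> bool" where
  "weakly_converges x a \<longleftrightarrow> (\<forall>y. (\<lambda>k. x k \<bullet> y) \<longlonglongrightarrow> a \<bullet> y)"

end

theory Submission
  imports Defs
begin

lemma small_t_le:
  fixes a b c :: real
  assumes "c \<ge> 0" "\<And>t. 0 < t \<Longrightarrow> t \<le> 1 \<Longrightarrow> a \<le> b + t * c"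
  shows "a \<le> b"
proof (rule ccontr)
  assume "\<not> a \<le> b"
  define t where "t = min 1 ((a - b) / (2 * c + 1))"
  have t0: "0 < t" "t \<le> 1" using \<open>\<not> a \<le> b\<close> assms(1) by (auto simp: t_def)
  have "t * c \<le> (a - b) / (2 * c + 1) * c"
    using assms(1) by (intro mult_right_mono) (auto simp: t_def)
  also have "\<dots> < a - b"
  proof -
    have "(a - b) * c < (a - b) * (2 * c + 1)" using \<open>\<not> a \<le> b\<close> assms(1) by (intro mult_strict_left_mono) auto
    thus ?thesis using assms(1) by (simp add: divide_simps mult.commute)
  qed
  finally show False using assms(2)[OF t0] by linarith
qed

lemma qdec_conv:
  fixes a e :: "nat \<Rightarrow> real"
  assumes a0: "\<And>k. 0 \<le> a k" and step: "\<And>k. a (Suc k) \<le> a k + e k"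
    and se: "summable e" and e0: "\<And>k. 0 \<le> e k"
  shows "convergent a"
proof -
  define b where "b k = a k - (\<Sum>j<k. e j)" for k
  have "decseq b" unfolding decseq_Suc_iff b_def using step by (auto simp: algebra_simps)
  moreover have "\<forall>i. - suminf e \<le> b i"
  proof
    fix i have "(\<Sum>j<i. e j) \<le> suminf e" using se e0 by (intro sum_le_suminf) auto
    thus "- suminf e \<le> b i" using a0[of i] by (simp add: b_def)
  qed
  ultimately obtain L where L: "b \<longlonglongrightarrow> L" by (rule decseq_convergent)
  have "(\<lambda>k. b k + (\<Sum>j<k. e j)) \<longlonglongrightarrow> L + suminf e"
    by (intro tendsto_add L summable_LIMSEQ se)
  thus ?thesis unfolding b_def convergent_def by auto
qed

lemma energy_summable:
  fixes E c e :: "nat \<Rightarrow> real"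
  assumes step: "\<And>k. E (Suc k) + c k \<le> E k + e k"
    and c0: "\<And>k. 0 \<le> c k" and E0: "\<And>k. 0 \<le> E k" and se: "summable e" and e0: "\<And>k. 0 \<le> e k"
  shows "summable c"
proof -
  have ind: "E n + (\<Sum>j<n. c j) \<le> E 0 + (\<Sum>j<n. e j)" for n
  proof (induction n)
    case (Suc n) thus ?case using step[of n] by simp
  qed simp
  show ?thesis
  proof (rule bounded_imp_summable[where B = "E 0 + suminf e"])
    fix n
    have "(\<Sum>k\<le>n. c k) = (\<Sum>k<Suc n. c k)" by (simp add: lessThan_Suc_atMost)
    also have "\<dots> \<le> E 0 + (\<Sum>j<Suc n. e j)" using ind[of "Suc n"] E0[of "Suc n"] by linarith
    also have "(\<Sum>j<Suc n. e j) \<le> suminf e" using se e0 by (intro sum_le_suminf) auto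
    finally show "(\<Sum>k\<le>n. c k) \<le> E 0 + suminf e" by simp
  qed (use c0 in auto)
qed

lemma energy_bounded:
  fixes E e :: "nat \<Rightarrow> real"
  assumes step: "\<And>k. E (Suc k) \<le> E k + e k"
    and se: "summable e" and e0: "\<And>k. 0 \<le> e k"
  shows "E n \<le> E 0 + suminf e"
proof -
  have ind: "E n \<le> E 0 + (\<Sum>j<n. e j)" for n
  proof (induction n)
    case (Suc n) thus ?case using step[of n] by simp
  qed simp
  have "(\<Sum>j<n. e j) \<le> suminf e" using se e0 by (intro sum_le_suminf) auto
  thus ?thesis using ind[of n] by linarith
qed

lemma gronwall_bdd:
  fixes R b :: "nat \<Rightarrow> real" and C :: real
  assumes R0: "\<And>k. 0 \<le> R k" and b0: "\<And>k. 0 \<le> b k" and sb: "summable b" and C0: "0 \<le> C"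
    and H: "\<And>k. (R k)^2 \<le> C + (\<Sum>j<k. b j * R (Suc j))"
  shows "R k \<le> suminf b + sqrt C"
proof (induction k rule: less_induct)
  case (less k)
  define K where "K = suminf b + sqrt C"
  define M where "M = max K (R k)"
  have B0: "0 \<le> suminf b" using sb b0 by (intro suminf_nonneg) auto
  have "(\<Sum>j<k. b j * R (Suc j)) \<le> (\<Sum>j<k. b j * M)"
  proof (intro sum_mono mult_left_mono)
    fix j assume j: "j \<in> {..<k}"
    show "R (Suc j) \<le> M"
    proof (cases "Suc j = k")
      case True thus ?thesis by (simp add: M_def)
    next
      case False
      hence "Suc j < k" using j by auto
      thus ?thesis using less[of "Suc j"] by (simp add: M_def K_def)
    qed
  qed (use b0 in auto)
  also have "\<dots> = (\<Sum>j<k. b j) * M" by (simp add: sum_distrib_right)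
  also have "\<dots> \<le> suminf b * M"
  proof (rule mult_right_mono)
    show "0 \<le> M" using R0[of k] by (simp add: M_def le_max_iff_disj)
    show "(\<Sum>j<k. b j) \<le> suminf b" using sb b0 by (intro sum_le_suminf) auto
  qed
  finally have R2: "(R k)^2 \<le> C + suminf b * M" using H[of k] by linarith
  show ?case
  proof (rule ccontr)
    assume "\<not> R k \<le> suminf b + sqrt C"
    hence gt: "R k > K" by (simp add: K_def)
    hence M: "M = R k" by (simp add: M_def)
    have "sqrt C < R k" using gt B0 by (simp add: K_def)
    have "C = sqrt C * sqrt C" using C0 by simp
    also have "\<dots> \<le> sqrt C * R k" using \<open>sqrt C < R k\<close> C0 by (intro mult_left_mono) auto
    finally have "C \<le> sqrt C * R k" .
    have Rpos: "0 < R k" using \<open>sqrt C < R k\<close> real_sqrt_ge_zero[OF C0] by linarith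
    have "R k * R k > R k * K" using mult_strict_left_mono[OF gt Rpos] by simp
    hence "(R k)^2 > R k * K" by (simp add: power2_eq_square)
    also have "R k * K = suminf b * R k + sqrt C * R k" by (simp add: K_def algebra_simps)
    finally show False using R2 M \<open>C \<le> sqrt C * R k\<close> by (simp add: mult.commute)
  qed
qed

lemma harm_zero:
  fixes V :: "nat \<Rightarrow> real"
  assumes V0: "\<And>k. 0 \<le> V k" and sV: "summable (\<lambda>k. real k * V k)"
    and lim: "(\<lambda>k. (real k)^2 * V k) \<longlonglongrightarrow> l"
  shows "l = 0"
proof (rule ccontr)
  assume "l \<noteq> 0"
  have "l \<ge> 0" using lim V0 by (intro LIMSEQ_le_const[OF lim]) auto
  hence lp: "l > 0" using \<open>l \<noteq> 0\<close> by simp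
  have ev: "eventually (\<lambda>k. (real k)^2 * V k > l / 2) sequentially"
    using lim lp by (intro order_tendstoD(1)) auto
  have ev2: "eventually (\<lambda>k. norm ((l/2) * inverse (real k)) \<le> real k * V k) sequentially"
    using ev eventually_gt_at_top[of "0::nat"]
  proof eventually_elim
    case (elim k)
    have "l/2 * inverse (real k) = (l/2) / real k" by (simp add: field_simps)
    also have "\<dots> \<le> ((real k)^2 * V k) / real k" using elim by (intro divide_right_mono) auto
    also have "\<dots> = real k * V k" using elim by (simp add: power2_eq_square)
    finally show ?case using lp by simp
  qed
  have "summable (\<lambda>k. (l/2) * inverse (real k))"
    by (rule summable_comparison_test_ev[OF ev2 sV])
  hence "summable (\<lambda>k. inverse (real k))"
    using lp summable_mult[of "\<lambda>k. (l/2) * inverse (real k)" "2 / l"] by simp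
  thus False using not_summable_harmonic[where 'a=real] by simp
qed

lemma line_deriv:
  fixes \<Phi> :: "'a::real_inner \<Rightarrow> real"
  assumes grad: "\<And>u. (\<Phi> has_derivative (\<lambda>h. G u \<bullet> h)) (at u)"
  shows "((\<lambda>t. \<Phi> (u + t *\<^sub>R d)) has_real_derivative (G (u + t *\<^sub>R d) \<bullet> d)) (at t)"
proof -
  have line: "((\<lambda>t. u + t *\<^sub>R d) has_derivative (\<lambda>h. h *\<^sub>R d)) (at t)"
    by (auto intro!: derivative_eq_intros)
  have "((\<lambda>t. \<Phi> (u + t *\<^sub>R d)) has_derivative (\<lambda>h. G (u + t *\<^sub>R d) \<bullet> (h *\<^sub>R d))) (at t)"
    using has_derivative_compose[OF line grad] .
  moreover have "(\<lambda>h. G (u + t *\<^sub>R d) \<bullet> (h *\<^sub>R d)) = (\<lambda>h. (G (u + t *\<^sub>R d) \<bullet> d) * h)"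
    by (auto simp: mult.commute)
  ultimately show ?thesis by (simp add: has_field_derivative_def)
qed

lemma grad_ineq:
  fixes \<Phi> :: "'a::real_inner \<Rightarrow> real"
  assumes cvx: "convex_on UNIV \<Phi>" and grad: "\<And>u. (\<Phi> has_derivative (\<lambda>h. G u \<bullet> h)) (at u)"
  shows "\<Phi> u + G u \<bullet> (v - u) \<le> \<Phi> v"
proof -
  define d where "d = v - u"
  define h where "h t = \<Phi> (u + t *\<^sub>R d)" for t
  have ch: "convex_on UNIV h"
    unfolding convex_on_def h_def
  proof (intro conjI convex_UNIV ballI allI impI)
    fix a b :: real and p q :: real assume pq: "0 \<le> p" "0 \<le> q" "p + q = 1"
    have "u + (p * a + q * b) *\<^sub>R d = p *\<^sub>R (u + a *\<^sub>R d) + q *\<^sub>R (u + b *\<^sub>R d)"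
      using pq by (simp add: algebra_simps flip: scaleR_add_left)
    hence "\<Phi> (u + (p *\<^sub>R a + q *\<^sub>R b) *\<^sub>R d) = \<Phi> (p *\<^sub>R (u + a *\<^sub>R d) + q *\<^sub>R (u + b *\<^sub>R d))" by simp
    also have "\<dots> \<le> p * \<Phi> (u + a *\<^sub>R d) + q * \<Phi> (u + b *\<^sub>R d)"
      using cvx pq unfolding convex_on_def by blast
    finally show "\<Phi> (u + (p *\<^sub>R a + q *\<^sub>R b) *\<^sub>R d) \<le> p * \<Phi> (u + a *\<^sub>R d) + q * \<Phi> (u + b *\<^sub>R d)" .
  qed
  have der: "(h has_real_derivative (G u \<bullet> d)) (at 0 within UNIV)"
    using line_deriv[OF grad, where u=u and t=0 and d=d]
    by (simp add: h_def[abs_def])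
  have "h 1 - h 0 \<ge> (G u \<bullet> d) * (1 - 0)"
    by (rule convex_on_imp_above_tangent[OF ch]) (use der in auto)
  thus ?thesis by (simp add: h_def d_def)
qed

lemma descent_lemma:
  fixes \<Phi> :: "'a::real_inner \<Rightarrow> real"
  assumes grad: "\<And>u. (\<Phi> has_derivative (\<lambda>h. G u \<bullet> h)) (at u)"
    and Lip: "\<And>u v. norm (G u - G v) \<le> L * norm (u - v)"
  shows "\<Phi> v \<le> \<Phi> u + G u \<bullet> (v - u) + L / 2 * (norm (v - u))^2"
proof -
  define d where "d = v - u"
  define q where "q t = \<Phi> (u + t *\<^sub>R d) - t * (G u \<bullet> d) - L / 2 * t^2 * (norm d)^2" for t
  have "q 1 \<le> q 0"
  proof (rule DERIV_nonpos_imp_nonincreasing[of 0 1 q])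
    fix t :: real assume t: "0 \<le> t" "t \<le> 1"
    have D: "(q has_real_derivative (G (u + t *\<^sub>R d) \<bullet> d - G u \<bullet> d - L * t * (norm d)^2)) (at t)"
      unfolding q_def
      by (rule derivative_eq_intros line_deriv[OF grad] refl | simp)+
    have "G (u + t *\<^sub>R d) \<bullet> d - G u \<bullet> d = (G (u + t *\<^sub>R d) - G u) \<bullet> d" by (simp add: inner_diff_left)
    also have "\<dots> \<le> norm (G (u + t *\<^sub>R d) - G u) * norm d" by (rule norm_cauchy_schwarz)
    also have "\<dots> \<le> L * norm (t *\<^sub>R d) * norm d" using Lip[of "u + t *\<^sub>R d" u] by (intro mult_right_mono) auto
    also have "\<dots> = L * t * (norm d)^2" using t by (simp add: power2_eq_square)
    finally show "\<exists>y. (q has_real_derivative y) (at t) \<and> y \<le> 0" using D by (intro exI[of _ "_ - _ - _"]) auto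
  qed simp
  thus ?thesis by (simp add: q_def d_def)
qed

lemma lsc_seq:
  fixes \<Psi> :: "'a::metric_space \<Rightarrow> ereal"
  assumes lsc: "lsc_fun \<Psi>" and v: "v \<longlonglongrightarrow> P" and le: "\<And>n. \<Psi> (v n) \<le> ereal (c n)"
    and c: "c \<longlonglongrightarrow> c0"
  shows "\<Psi> P \<le> ereal c0"
proof (rule ccontr)
  assume "\<not> \<Psi> P \<le> ereal c0"
  hence "ereal c0 < \<Psi> P" by simp
  then obtain z :: real where z: "ereal c0 < ereal z" "ereal z < \<Psi> P" using ereal_dense2 by blast
  have "ereal z < Liminf (at P) \<Psi>" using z(2) lsc unfolding lsc_fun_def by (meson order_less_le_trans)
  hence "eventually (\<lambda>u. \<Psi> u > ereal z) (at P)" by (rule less_LiminfD)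
  hence "eventually (\<lambda>u. u \<noteq> P \<longrightarrow> \<Psi> u > ereal z) (nhds P)" by (simp add: eventually_at_filter)
  hence "eventually (\<lambda>n. v n \<noteq> P \<longrightarrow> \<Psi> (v n) > ereal z) sequentially"
    using v unfolding filterlim_iff by blast
  hence e1: "eventually (\<lambda>n. \<Psi> (v n) > ereal z) sequentially"
    by eventually_elim (use z(2) in auto)
  have e2: "eventually (\<lambda>n. c n < z) sequentially" using c z(1) by (intro order_tendstoD(2)) auto
  from e1 e2 have "eventually (\<lambda>n. False) sequentially"
  proof eventually_elim
    case (elim n) thus ?case using le[of n] by (meson ereal_less_eq(3) less_le_not_le order.strict_trans1)
  qed
  thus False by simp
qed

lemma quad_lower:
  fixes a b c r :: real
  assumes "a > 0"
  shows "a * r^2 - b * r + c \<ge> c - b^2 / (4 * a)"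
proof -
  have "0 \<le> (2 * a * r - b)^2" by simp
  hence "0 \<le> ((2 * a * r - b)^2) / (4 * a)" using assms by simp
  also have "((2 * a * r - b)^2) / (4 * a) = a * r^2 - b * r + b^2 / (4 * a)"
    using assms by (simp add: field_simps power2_eq_square)
  finally show ?thesis by simp
qed

lemma mid_norm:
  fixes a b w :: "'a::real_inner"
  shows "(norm ((1/2) *\<^sub>R a + (1/2) *\<^sub>R b - w))^2 = (norm (a - w))^2 / 2 + (norm (b - w))^2 / 2 - (norm (a - b))^2 / 4"
  by (simp add: power2_norm_eq_inner inner_simps algebra_simps field_simps)

lemma prox_min:
  fixes \<Psi> :: "'a::{real_inner,complete_space} \<Rightarrow> ereal" and w :: 'a
  assumes proper: "proper_fun \<Psi>" and lsc: "lsc_fun \<Psi>" and cvx: "convex_ereal_fun \<Psi>"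
    and s: "0 < s"
    and lower: "\<And>v. ereal (A - B * norm v - Cq * (norm v)^2) \<le> \<Psi> v" and Cq: "Cq < 1 / (2 * s)"
  shows "\<Psi> (prox s \<Psi> w) \<noteq> \<infinity> \<and> \<Psi> (prox s \<Psi> w) \<noteq> -\<infinity> \<and>
    (\<forall>v. \<Psi> (prox s \<Psi> w) + ereal ((norm (prox s \<Psi> w - w))^2 / (2 * s))
          \<le> \<Psi> v + ereal ((norm (v - w))^2 / (2 * s)))"
proof -
  define f where "f v = \<Psi> v + ereal ((norm (v - w))^2 / (2 * s))" for v
  define a where "a = 1 / (2 * s) - Cq"
  have a0: "a > 0" using Cq by (simp add: a_def)
  define \<omega> where "\<omega> = norm w"
  define \<mu>0 where "\<mu>0 = A + \<omega>^2 / (2 * s) - (B + \<omega> / s)^2 / (4 * a)"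
  have ninf: "\<And>v. \<Psi> v \<noteq> -\<infinity>" using proper by (simp add: proper_fun_def)
  have flow: "ereal \<mu>0 \<le> f v" for v
  proof -
    define r where "r = norm v"
    have "\<bar>r - \<omega>\<bar> \<le> norm (v - w)" unfolding r_def \<omega>_def by (rule norm_triangle_ineq3)
    hence sq: "(r - \<omega>)^2 \<le> (norm (v - w))^2"
      by (metis abs_ge_zero power2_abs power_mono)
    have "\<mu>0 \<le> a * r^2 - (B + \<omega> / s) * r + (A + \<omega>^2 / (2 * s))"
      using quad_lower[OF a0, where b="B + \<omega> / s" and r=r and c="A + \<omega>^2 / (2 * s)"] by (simp add: \<mu>0_def)
    also have "\<dots> = A - B * r - Cq * r^2 + (r - \<omega>)^2 / (2 * s)"
      using s by (simp add: a_def field_simps power2_eq_square)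
    also have "\<dots> \<le> A - B * r - Cq * r^2 + (norm (v - w))^2 / (2 * s)"
      using sq s by (simp add: divide_right_mono)
    finally have "ereal \<mu>0 \<le> ereal (A - B * r - Cq * r^2) + ereal ((norm (v - w))^2 / (2 * s))"
      by simp
    also have "\<dots> \<le> f v" unfolding f_def r_def by (intro add_right_mono lower)
    finally show ?thesis .
  qed
  obtain v0 where v0: "\<Psi> v0 \<noteq> \<infinity>" using proper by (auto simp: proper_fun_def)
  define \<mu> where "\<mu> = (INF v. f v)"
  have mu_le: "\<mu> \<le> f v" for v unfolding \<mu>_def by (rule INF_lower) simp
  have "\<mu> \<ge> ereal \<mu>0" unfolding \<mu>_def by (rule INF_greatest) (rule flow)
  moreover have "\<mu> < \<infinity>"
  proof -
    have "f v0 < \<infinity>" using v0 ninf[of v0] by (cases "\<Psi> v0") (auto simp: f_def)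
    thus ?thesis using mu_le[of v0] by (meson order_le_less_trans)
  qed
  ultimately obtain \<mu>r where mur: "\<mu> = ereal \<mu>r" by (cases \<mu>) auto
  define \<psi> where "\<psi> u = real_of_ereal (\<Psi> u)" for u
  define p where "p u = \<psi> u + (norm (u - w))^2 / (2 * s)" for u
  have fin_f: "\<Psi> u = ereal (\<psi> u) \<and> f u = ereal (p u)" if "f u < \<infinity>" for u
  proof -
    have "\<Psi> u \<noteq> \<infinity>" using that by (auto simp: f_def)
    thus ?thesis using ninf[of u] by (cases "\<Psi> u") (auto simp: \<psi>_def p_def f_def)
  qed
  have MID: "(norm (a1 - b1))^2 \<le> 4 * s * (p a1 + p b1 - 2 * \<mu>r)"
    if fa: "\<Psi> a1 = ereal (\<psi> a1)" and fb: "\<Psi> b1 = ereal (\<psi> b1)" for a1 b1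
  proof -
    define m where "m = (1/2) *\<^sub>R a1 + (1/2) *\<^sub>R b1"
    have "\<Psi> m \<le> ereal (1 - 1/2) * \<Psi> a1 + ereal (1/2) * \<Psi> b1"
      using cvx unfolding convex_ereal_fun_def m_def
      by (drule_tac spec[of _ a1], drule_tac spec[of _ b1], drule_tac spec[of _ "1/2"]) simp
    also have "\<dots> = ereal (\<psi> a1 / 2 + \<psi> b1 / 2)" using fa fb by simp
    finally have "f m \<le> ereal (\<psi> a1 / 2 + \<psi> b1 / 2) + ereal ((norm (m - w))^2 / (2 * s))"
      unfolding f_def by (intro add_right_mono)
    hence "f m \<le> ereal (\<psi> a1 / 2 + \<psi> b1 / 2 + (norm (m - w))^2 / (2 * s))" by simp
    hence "ereal \<mu>r \<le> ereal (\<psi> a1 / 2 + \<psi> b1 / 2 + (norm (m - w))^2 / (2 * s))"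
      using mu_le[of m] mur by (metis order_trans)
    hence "\<mu>r \<le> \<psi> a1 / 2 + \<psi> b1 / 2 + (norm (m - w))^2 / (2 * s)" by simp
    also have "(norm (m - w))^2 = (norm (a1 - w))^2 / 2 + (norm (b1 - w))^2 / 2 - (norm (a1 - b1))^2 / 4"
      unfolding m_def by (rule mid_norm)
    also have "\<psi> a1 / 2 + \<psi> b1 / 2 + ((norm (a1 - w))^2 / 2 + (norm (b1 - w))^2 / 2 - (norm (a1 - b1))^2 / 4) / (2 * s)
       = (p a1 + p b1) / 2 - (norm (a1 - b1))^2 / (8 * s)"
      using s by (simp add: p_def field_simps)
    finally have "\<mu>r \<le> (p a1 + p b1) / 2 - (norm (a1 - b1))^2 / (8 * s)" .
    thus ?thesis using s by (simp add: field_simps)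
  qed
  have "\<forall>n. \<exists>v. f v < ereal (\<mu>r + 1 / Suc n)"
  proof
    fix n
    have "\<mu> < ereal (\<mu>r + 1 / Suc n)" using mur by simp
    thus "\<exists>v. f v < ereal (\<mu>r + 1 / Suc n)" unfolding \<mu>_def by (simp add: INF_less_iff)
  qed
  then obtain vs where vs: "\<And>n. f (vs n) < ereal (\<mu>r + 1 / Suc n)" by metis
  have vsfin: "\<Psi> (vs n) = ereal (\<psi> (vs n)) \<and> f (vs n) = ereal (p (vs n))" for n
    using vs[of n] by (intro fin_f) (use less_ereal.simps(4) order.strict_trans in blast)
  have pvs: "\<mu>r \<le> p (vs n) \<and> p (vs n) < \<mu>r + 1 / Suc n" for n
    using vs[of n] vsfin[of n] mu_le[of "vs n"] mur by auto
  have "Cauchy vs"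
  proof (rule metric_CauchyI)
    fix e :: real assume e: "0 < e"
    obtain M :: nat where M: "8 * s / e^2 < real M" using reals_Archimedean2 by blast
    show "\<exists>M. \<forall>m\<ge>M. \<forall>n\<ge>M. dist (vs m) (vs n) < e"
    proof (intro exI allI impI)
      fix m n assume mn: "M \<le> m" "M \<le> n"
      have h1: "1 / real (Suc m) \<le> 1 / Suc M" "1 / real (Suc n) \<le> 1 / Suc M"
        using mn by (auto simp: divide_simps)
      have "(norm (vs m - vs n))^2 \<le> 4 * s * (p (vs m) + p (vs n) - 2 * \<mu>r)"
        using MID vsfin by blast
      also have "\<dots> < 4 * s * (1 / Suc m + 1 / Suc n)"
        using pvs[of m] pvs[of n] s by (intro mult_strict_left_mono) auto
      also have "\<dots> \<le> 4 * s * (2 / Suc M)" using h1 s by (intro mult_left_mono) auto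
      also have "\<dots> < e^2"
      proof -
        have "8 * s < e^2 * real M" using M e by (simp add: field_simps)
        also have "\<dots> \<le> e^2 * real (Suc M)" by (intro mult_left_mono) auto
        finally have "8 * s < e^2 * real (Suc M)" .
        thus ?thesis using e by (simp add: field_simps)
      qed
      finally have "(norm (vs m - vs n))^2 < e^2" .
      hence "norm (vs m - vs n) < e" using e by (simp add: power_less_imp_less_base)
      thus "dist (vs m) (vs n) < e" by (simp add: dist_norm)
    qed
  qed
  then obtain P where P: "vs \<longlonglongrightarrow> P" using Cauchy_convergent_iff convergent_def by blast
  have plim: "(\<lambda>n. p (vs n)) \<longlonglongrightarrow> \<mu>r"
  proof (rule tendsto_sandwich[of "\<lambda>n. \<mu>r" _ _ "\<lambda>n. \<mu>r + 1 / Suc n"])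
    show "eventually (\<lambda>n. \<mu>r \<le> p (vs n)) sequentially" using pvs by auto
    show "eventually (\<lambda>n. p (vs n) \<le> \<mu>r + 1 / Suc n) sequentially" using pvs by (intro always_eventually allI less_imp_le) blast
    have "(\<lambda>n. 1 / real (Suc n)) \<longlonglongrightarrow> 0" by (rule LIMSEQ_Suc[OF lim_const_over_n])
    thus "(\<lambda>n. \<mu>r + 1 / real (Suc n)) \<longlonglongrightarrow> \<mu>r" using tendsto_add[of "\<lambda>n. \<mu>r" \<mu>r] by fastforce
  qed simp
  have "\<Psi> P \<le> ereal (\<mu>r - (norm (P - w))^2 / (2 * s))"
  proof (rule lsc_seq[OF lsc P])
    show "\<Psi> (vs n) \<le> ereal (p (vs n) - (norm (vs n - w))^2 / (2 * s))" for n
      using vsfin[of n] by (simp add: p_def)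
    show "(\<lambda>n. p (vs n) - (norm (vs n - w))^2 / (2 * s)) \<longlonglongrightarrow> \<mu>r - (norm (P - w))^2 / (2 * s)"
      using s by (intro tendsto_intros plim P) auto
  qed
  hence fP: "f P \<le> \<mu>" unfolding f_def mur
    by (metis add_right_mono diff_add_cancel plus_ereal.simps(1))
  have Pmin: "\<forall>v. f P \<le> f v" using fP mu_le order_trans by blast
  have uniq: "Q = P" if Q: "\<forall>v. f Q \<le> f v" for Q
  proof -
    have fQ: "f Q = \<mu>" using Q fP mu_le[of Q] by (metis antisym order_trans)
    have fP': "f P = \<mu>" using fP mu_le[of P] by simp
    have Qf: "\<Psi> Q = ereal (\<psi> Q) \<and> f Q = ereal (p Q)" using fQ mur by (intro fin_f) simp
    have Pf: "\<Psi> P = ereal (\<psi> P) \<and> f P = ereal (p P)" using fP' mur by (intro fin_f) simp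
    have "(norm (Q - P))^2 \<le> 4 * s * (p Q + p P - 2 * \<mu>r)" using MID Qf Pf by blast
    moreover have "p Q = \<mu>r" "p P = \<mu>r" using Qf Pf fQ fP' mur by auto
    ultimately have "(norm (Q - P))^2 \<le> 0" by simp
    thus ?thesis by simp
  qed
  have proxP: "prox s \<Psi> w = P"
    unfolding prox_def
  proof (rule the_equality)
    show "\<forall>v. \<Psi> P + ereal ((norm (P - w))^2 / (2 * s)) \<le> \<Psi> v + ereal ((norm (v - w))^2 / (2 * s))"
      using Pmin by (simp add: f_def)
    fix Q assume "\<forall>v. \<Psi> Q + ereal ((norm (Q - w))^2 / (2 * s)) \<le> \<Psi> v + ereal ((norm (v - w))^2 / (2 * s))"
    thus "Q = P" using uniq by (simp add: f_def)
  qed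
  have fPfin: "\<Psi> P = ereal (\<psi> P)" using fP mur by (intro conjunct1[OF fin_f]) (metis PInfty_neq_ereal(1) ereal_infty_less(1) order_le_less_trans)
  show ?thesis unfolding proxP using Pmin fPfin by (auto simp: f_def)
qed

lemma prox_subgrad:
  fixes \<Psi> :: "'a::real_inner \<Rightarrow> ereal"
  assumes cvx: "convex_ereal_fun \<Psi>" and s: "0 < s"
    and fP: "\<Psi> P = ereal pP" and fu: "\<Psi> u = ereal pu"
    and min: "\<And>v. \<Psi> P + ereal ((norm (P - w))^2 / (2 * s)) \<le> \<Psi> v + ereal ((norm (v - w))^2 / (2 * s))"
  shows "pP \<le> pu + (1 / s) * ((P - w) \<bullet> (u - P))"
proof (rule small_t_le[where c = "(norm (u - P))^2 / (2 * s)"])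
  show "0 \<le> (norm (u - P))^2 / (2 * s)" using s by simp
  fix t :: real assume t: "0 < t" "t \<le> 1"
  define v where "v = (1 - t) *\<^sub>R P + t *\<^sub>R u"
  have "\<Psi> v \<le> ereal (1 - t) * \<Psi> P + ereal t * \<Psi> u"
    using cvx t unfolding convex_ereal_fun_def v_def by auto
  also have "\<dots> = ereal ((1 - t) * pP + t * pu)" using fP fu by simp
  finally have "\<Psi> v + ereal ((norm (v - w))^2 / (2 * s)) \<le> ereal ((1 - t) * pP + t * pu + (norm (v - w))^2 / (2 * s))"
    by (metis add_right_mono plus_ereal.simps(1))
  have "ereal (pP + (norm (P - w))^2 / (2 * s)) = \<Psi> P + ereal ((norm (P - w))^2 / (2 * s))" using fP by simp
  also have "\<dots> \<le> \<Psi> v + ereal ((norm (v - w))^2 / (2 * s))" by (rule min)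
  also have "\<dots> \<le> ereal ((1 - t) * pP + t * pu + (norm (v - w))^2 / (2 * s))" by fact
  finally have "ereal (pP + (norm (P - w))^2 / (2 * s)) \<le> ereal ((1 - t) * pP + t * pu + (norm (v - w))^2 / (2 * s))" .
  hence I: "pP + (norm (P - w))^2 / (2 * s) \<le> (1 - t) * pP + t * pu + (norm (v - w))^2 / (2 * s)" by simp
  have vw: "v - w = (P - w) + t *\<^sub>R (u - P)" by (simp add: v_def algebra_simps)
  have "(norm (v - w))^2 = (norm (P - w))^2 + 2 * t * ((P - w) \<bullet> (u - P)) + t^2 * (norm (u - P))^2"
  proof -
    have gen: "(norm (a + b))^2 = (norm a)^2 + 2 * (a \<bullet> b) + (norm b)^2" for a b :: 'a
      by (simp add: power2_norm_eq_inner inner_add_left inner_add_right inner_commute)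
    show ?thesis unfolding vw gen by (simp add: power_mult_distrib)
  qed
  with I have "t * pP \<le> t * pu + t * ((1 / s) * ((P - w) \<bullet> (u - P))) + t * (t * ((norm (u - P))^2 / (2 * s)))"
    using s by (simp add: field_simps power2_eq_square)
  hence "t * pP \<le> t * (pu + (1 / s) * ((P - w) \<bullet> (u - P)) + t * ((norm (u - P))^2 / (2 * s)))"
    by (simp add: algebra_simps)
  thus "pP \<le> pu + (1 / s) * ((P - w) \<bullet> (u - P)) + t * ((norm (u - P))^2 / (2 * s))"
    using t by simp
qed

lemma key_ineq:
  fixes \<Phi> :: "'a::real_inner \<Rightarrow> real"
  assumes cvx: "convex_on UNIV \<Phi>" and grad: "\<And>u. (\<Phi> has_derivative (\<lambda>h. G u \<bullet> h)) (at u)"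
    and Lip: "\<And>u v. norm (G u - G v) \<le> L * norm (u - v)"
    and s: "0 < s" "s * L \<le> 1"
    and sub: "pP \<le> pu + (1 / s) * ((P - (y - s *\<^sub>R (G y - gk))) \<bullet> (u - P))"
  shows "pP + \<Phi> P \<le> pu + \<Phi> u + (1 / s) * ((P - y) \<bullet> (u - y)) - (1 / (2 * s)) * (norm (P - y))^2 + gk \<bullet> (P - u)"
proof -
  define d where "d = P - y"
  have D: "\<Phi> P \<le> \<Phi> y + G y \<bullet> d + L / 2 * (norm d)^2"
    unfolding d_def by (rule descent_lemma[OF grad Lip])
  have GI: "\<Phi> y + G y \<bullet> (u - y) \<le> \<Phi> u" by (rule grad_ineq[OF cvx grad])
  have e1: "(1 / s) * ((P - (y - s *\<^sub>R (G y - gk))) \<bullet> (u - P))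
      = (1 / s) * (d \<bullet> (u - y)) - (1 / s) * (norm d)^2 + G y \<bullet> (u - P) - gk \<bullet> (u - P)"
  proof -
    have "P - (y - s *\<^sub>R (G y - gk)) = d + s *\<^sub>R G y - s *\<^sub>R gk" by (simp add: d_def algebra_simps)
    moreover have "u - P = (u - y) - d" by (simp add: d_def)
    ultimately show ?thesis using s
      by (simp add: inner_simps power2_norm_eq_inner field_simps)
  qed
  have Ld: "L / 2 * (norm d)^2 \<le> (1 / (2 * s)) * (norm d)^2"
  proof -
    have "L \<le> 1 / s" using s by (simp add: field_simps mult.commute)
    thus ?thesis by (intro mult_right_mono) (auto simp: field_simps)
  qed
  have "G y \<bullet> (u - P) - G y \<bullet> (u - y) + G y \<bullet> d = 0" by (simp add: d_def inner_simps)
  hence "pP + \<Phi> P \<le> pu + \<Phi> u + (1 / s) * (d \<bullet> (u - y)) - (1 / s) * (norm d)^2 + L / 2 * (norm d)^2 + gk \<bullet> (P - u)"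
    using sub e1 D GI by (simp add: inner_diff_right)
  also have "\<dots> \<le> pu + \<Phi> u + (1 / s) * (d \<bullet> (u - y)) - (1 / (2 * s)) * (norm d)^2 + gk \<bullet> (P - u)"
    using Ld by (simp add: field_simps)
  finally show ?thesis by (simp add: d_def)
qed

lemma energy_step:
  fixes a b c z gk y :: "'a::real_inner" and T \<tau> s Wa Wb :: real
  assumes T: "T \<ge> 1" and s: "0 < s"
    and y: "y = b + ((\<tau> - 1) / T) *\<^sub>R (b - c)"
    and I1: "Wa \<le> Wb + (1 / s) * ((a - y) \<bullet> (b - y)) - (1 / (2 * s)) * (norm (a - y))^2 + gk \<bullet> (a - b)"
    and I2: "Wa \<le> (1 / s) * ((a - y) \<bullet> (z - y)) - (1 / (2 * s)) * (norm (a - y))^2 + gk \<bullet> (a - z)"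
  shows "T^2 * Wa + (1 / (2 * s)) * (norm (b + T *\<^sub>R (a - b) - z))^2
     \<le> (T^2 - T) * Wb + (1 / (2 * s)) * (norm (c + \<tau> *\<^sub>R (b - c) - z))^2 + T * (gk \<bullet> (b + T *\<^sub>R (a - b) - z))"
proof -
  define ua where "ua = b + T *\<^sub>R (a - b)"
  define ub where "ub = c + \<tau> *\<^sub>R (b - c)"
  have Ty: "T *\<^sub>R y = T *\<^sub>R b + (\<tau> - 1) *\<^sub>R (b - c)" using T by (simp add: y scaleR_add_right)
  have id1: "T *\<^sub>R (a - y) = ua - ub"
    using Ty by (simp add: ua_def ub_def algebra_simps)
  have id2: "(T - 1) *\<^sub>R (b - y) + (z - y) = z - ub"
  proof -
    have "(T - 1) *\<^sub>R (b - y) + (z - y) = (T - 1) *\<^sub>R b - T *\<^sub>R y + z" by (simp add: algebra_simps)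
    also have "\<dots> = z - ub" unfolding Ty by (simp add: ub_def algebra_simps)
    finally show ?thesis .
  qed
  have id3: "(T - 1) *\<^sub>R (a - b) + (a - z) = ua - z" by (simp add: ua_def algebra_simps)
  have T0: "0 \<le> T * (T - 1)" "0 \<le> T" using T by auto
  have C: "T^2 * Wa \<le> T * (T - 1) * Wb + (T / s) * ((a - y) \<bullet> ((T - 1) *\<^sub>R (b - y) + (z - y)))
      - (T^2 / (2 * s)) * (norm (a - y))^2 + T * (gk \<bullet> ((T - 1) *\<^sub>R (a - b) + (a - z)))"
  proof -
    have "T * (T - 1) * Wa \<le> T * (T - 1) * (Wb + (1 / s) * ((a - y) \<bullet> (b - y)) - (1 / (2 * s)) * (norm (a - y))^2 + gk \<bullet> (a - b))"
      using I1 T0(1) by (rule mult_left_mono)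
    moreover have "T * Wa \<le> T * ((1 / s) * ((a - y) \<bullet> (z - y)) - (1 / (2 * s)) * (norm (a - y))^2 + gk \<bullet> (a - z))"
      using I2 T0(2) by (rule mult_left_mono)
    moreover have "T * (T - 1) * (Wb + (1 / s) * ((a - y) \<bullet> (b - y)) - (1 / (2 * s)) * (norm (a - y))^2 + gk \<bullet> (a - b))
       + T * ((1 / s) * ((a - y) \<bullet> (z - y)) - (1 / (2 * s)) * (norm (a - y))^2 + gk \<bullet> (a - z))
       = T * (T - 1) * Wb + (T / s) * ((a - y) \<bullet> ((T - 1) *\<^sub>R (b - y) + (z - y)))
      - (T^2 / (2 * s)) * (norm (a - y))^2 + T * (gk \<bullet> ((T - 1) *\<^sub>R (a - b) + (a - z)))"
      by (simp add: inner_add_right inner_scaleR_right power2_eq_square algebra_simps add_divide_distrib diff_divide_distrib)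
    moreover have "T^2 * Wa = T * (T - 1) * Wa + T * Wa" by (simp add: power2_eq_square algebra_simps)
    ultimately show ?thesis by linarith
  qed
  have "(T / s) * ((a - y) \<bullet> ((T - 1) *\<^sub>R (b - y) + (z - y))) - (T^2 / (2 * s)) * (norm (a - y))^2
      = (1 / s) * ((ua - ub) \<bullet> (z - ub)) - (1 / (2 * s)) * (norm (ua - ub))^2"
  proof -
    have nT: "(norm (T *\<^sub>R (a - y)))^2 = T^2 * (norm (a - y))^2" by (simp add: power_mult_distrib)
    show ?thesis unfolding id2 id1[symmetric] nT inner_scaleR_left by (simp add: field_simps)
  qed
  also have "\<dots> = (1 / (2 * s)) * (norm (ub - z))^2 - (1 / (2 * s)) * (norm (ua - z))^2"
  proof -
    have "ua - z = (ua - ub) + (ub - z)" by simp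
    hence "(norm (ua - z))^2 = (norm (ua - ub))^2 + 2 * ((ua - ub) \<bullet> (ub - z)) + (norm (ub - z))^2"
      by (simp add: power2_norm_eq_inner inner_simps inner_commute)
    moreover have "(ua - ub) \<bullet> (z - ub) = - ((ua - ub) \<bullet> (ub - z))"
      by (metis inner_minus_right minus_diff_eq)
    ultimately show ?thesis using s by (simp add: field_simps)
  qed
  finally have E: "(T / s) * ((a - y) \<bullet> ((T - 1) *\<^sub>R (b - y) + (z - y))) - (T^2 / (2 * s)) * (norm (a - y))^2
      = (1 / (2 * s)) * (norm (ub - z))^2 - (1 / (2 * s)) * (norm (ua - z))^2" .
  from C have "T^2 * Wa \<le> T * (T - 1) * Wb + ((T / s) * ((a - y) \<bullet> ((T - 1) *\<^sub>R (b - y) + (z - y))) - (T^2 / (2 * s)) * (norm (a - y))^2)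
      + T * (gk \<bullet> ((T - 1) *\<^sub>R (a - b) + (a - z)))" by linarith
  hence "T^2 * Wa \<le> T * (T - 1) * Wb + ((1 / (2 * s)) * (norm (ub - z))^2 - (1 / (2 * s)) * (norm (ua - z))^2)
      + T * (gk \<bullet> (ua - z))" unfolding E id3 .
  moreover have "T * (T - 1) * Wb = (T^2 - T) * Wb" by (simp add: power2_eq_square algebra_simps)
  ultimately show ?thesis unfolding ua_def ub_def by linarith
qed

lemma dstep:
  fixes a b c gk y :: "'a::real_inner" and \<theta> s Wa Wb :: real
  assumes s: "0 < s" and y: "y = b + \<theta> *\<^sub>R (b - c)"
    and I1: "Wa \<le> Wb + (1 / s) * ((a - y) \<bullet> (b - y)) - (1 / (2 * s)) * (norm (a - y))^2 + gk \<bullet> (a - b)"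
  shows "Wa + (norm (a - b))^2 / (2 * s) \<le> Wb + \<theta>^2 * ((norm (b - c))^2 / (2 * s)) + gk \<bullet> (a - b)"
proof -
  have ab: "a - b = (a - y) - (b - y)" by simp
  have "(norm (a - b))^2 = (norm (a - y))^2 - 2 * ((a - y) \<bullet> (b - y)) + (norm (b - y))^2"
    unfolding ab by (simp add: power2_norm_eq_inner inner_simps inner_commute)
  moreover have "(norm (b - y))^2 = \<theta>^2 * (norm (b - c))^2"
    by (simp add: y power_mult_distrib)
  ultimately have ip: "(a - y) \<bullet> (b - y) = ((norm (a - y))^2 + \<theta>^2 * (norm (b - c))^2 - (norm (a - b))^2) / 2"
    by simp
  have "(1 / s) * ((a - y) \<bullet> (b - y)) - (1 / (2 * s)) * (norm (a - y))^2
     = \<theta>^2 * ((norm (b - c))^2 / (2 * s)) - (norm (a - b))^2 / (2 * s)"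
    unfolding ip using s by (simp add: field_simps)
  thus ?thesis using I1 by linarith
qed

lemma infdist_approx:
  fixes A :: "'a::metric_space set"
  assumes "A \<noteq> {}" "e > 0"
  shows "\<exists>a\<in>A. dist x a < infdist x A + e"
proof (rule ccontr)
  assume "\<not> ?thesis"
  hence "\<forall>a\<in>A. infdist x A + e \<le> dist x a" by (auto simp: not_less)
  moreover have "infdist x A = (INF a\<in>A. dist x a)" using assms(1) by (simp add: infdist_def)
  moreover have "infdist x A + e \<le> (INF a\<in>A. dist x a)"
    by (rule cINF_greatest) (use assms(1) \<open>\<forall>a\<in>A. infdist x A + e \<le> dist x a\<close> in auto)
  ultimately have "infdist x A + e \<le> infdist x A" by simp
  thus False using assms(2) by simp
qed

definition tailhull :: "(nat \<Rightarrow> 'a::real_normed_vector) \<Rightarrow> nat set \<Rightarrow> nat \<Rightarrow> 'a set" where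
  "tailhull x A n = closure (convex hull (x ` {k\<in>A. n \<le> k}))"

lemma tailhull_mono: "n \<le> m \<Longrightarrow> tailhull x A m \<subseteq> tailhull x A n"
  unfolding tailhull_def by (intro closure_mono hull_mono image_mono) auto

lemma tailhull_ne: "infinite A \<Longrightarrow> \<exists>k\<in>A. n \<le> k \<and> x k \<in> tailhull x A n"
proof -
  assume "infinite A"
  then obtain k where "k \<in> A" "n \<le> k" using infinite_nat_iff_unbounded_le by blast
  hence "x k \<in> x ` {k\<in>A. n \<le> k}" by auto
  hence "x k \<in> convex hull (x ` {k\<in>A. n \<le> k})" by (rule hull_inc)
  hence "x k \<in> tailhull x A n" unfolding tailhull_def using closure_subset by blast
  thus ?thesis using \<open>k \<in> A\<close> \<open>n \<le> k\<close> by blast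
qed

lemma tailhull_halfspace:
  fixes x :: "nat \<Rightarrow> 'a::real_inner"
  assumes "\<And>k. k \<in> A \<Longrightarrow> N \<le> k \<Longrightarrow> v \<bullet> x k \<le> c" and "w \<in> tailhull x A N"
  shows "v \<bullet> w \<le> c"
proof -
  have "x ` {k\<in>A. N \<le> k} \<subseteq> {u. v \<bullet> u \<le> c}" using assms(1) by auto
  hence "convex hull (x ` {k\<in>A. N \<le> k}) \<subseteq> {u. v \<bullet> u \<le> c}"
    by (intro hull_minimal convex_halfspace_le)
  hence "tailhull x A N \<subseteq> {u. v \<bullet> u \<le> c}"
    unfolding tailhull_def by (intro closure_minimal closed_halfspace_le)
  thus ?thesis using assms(2) by auto
qed

lemma tailhull_closed_convex:
  fixes x :: "nat \<Rightarrow> 'a::real_normed_vector"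
  assumes "\<And>k. k \<in> A \<Longrightarrow> N \<le> k \<Longrightarrow> x k \<in> C" "closed C" "convex C"
  shows "tailhull x A N \<subseteq> C"
proof -
  have "x ` {k\<in>A. N \<le> k} \<subseteq> C" using assms(1) by auto
  hence "convex hull (x ` {k\<in>A. N \<le> k}) \<subseteq> C" by (intro hull_minimal assms(3))
  thus ?thesis unfolding tailhull_def by (intro closure_minimal assms(2))
qed

lemma lin3_aux: "(dd::real) \<le> aa / 2 + bb / 2 - cc / 4 \<Longrightarrow> aa \<le> dd + p \<Longrightarrow> bb \<le> ee + q
  \<Longrightarrow> cc \<le> 2 * (ee - dd) + 2 * p + 2 * q"
  by (simp add: field_simps)

lemma lin4_aux: "\<bar>(X::real)\<bar> < E / 8 \<Longrightarrow> a < E / 8 \<Longrightarrow> b < E / 8 \<Longrightarrow> 2 * X + 2 * a + 2 * b < E"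
  by linarith

lemma nested_inter:
  fixes x :: "nat \<Rightarrow> 'a::{real_inner,complete_space}"
  assumes A: "infinite A" and bdd: "\<And>k. norm (x k) \<le> M"
  shows "\<exists>w. \<forall>n. w \<in> tailhull x A n"
proof -
  define H where "H = tailhull x A"
  have Hne: "H n \<noteq> {}" for n using tailhull_ne[OF A, of n x] by (auto simp: H_def)
  have Hmono: "n \<le> m \<Longrightarrow> H m \<subseteq> H n" for n m by (simp add: H_def tailhull_mono)
  have Hconv: "convex (H n)" for n unfolding H_def tailhull_def by (intro convex_closure convex_convex_hull)
  have Hclosed: "closed (H n)" for n unfolding H_def tailhull_def by simp
  define d where "d n = infdist 0 (H n)" for n
  have d0: "0 \<le> d n" for n by (simp add: d_def infdist_nonneg)
  have dM: "d n \<le> M" for n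
  proof -
    obtain k where "k \<in> A" "n \<le> k" "x k \<in> H n" using tailhull_ne[OF A, of n x]
      by (auto simp: H_def)
    hence "d n \<le> dist 0 (x k)" unfolding d_def by (intro infdist_le)
    thus ?thesis using bdd[of k] by simp
  qed
  have dmono: "n \<le> m \<Longrightarrow> d n \<le> d m" for n m
    unfolding d_def using Hmono Hne by (intro infdist_mono) auto
  have dn_le: "\<And>u. u \<in> H n \<Longrightarrow> d n \<le> norm u" for n
    unfolding d_def by (metis dist_0_norm infdist_le)
  have "convergent d"
    by (rule Bseq_mono_convergent) (use dmono d0 dM in \<open>auto intro!: BseqI'[where K=M]\<close>)
  hence "convergent (\<lambda>n. (d n)^2)" by (metis convergent_def tendsto_power)
  hence "Cauchy (\<lambda>n. (d n)^2)" by (rule convergent_Cauchy)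
  have "\<forall>n. \<exists>p. p \<in> H n \<and> (norm p)^2 \<le> (d n)^2 + 1 / Suc n"
  proof
    fix n
    define e where "e = sqrt ((d n)^2 + 1 / Suc n) - d n"
    have "d n < sqrt ((d n)^2 + 1 / Suc n)"
      using d0[of n] by (intro real_less_rsqrt) auto
    hence e0: "e > 0" by (simp add: e_def)
    obtain p where p: "p \<in> H n" "dist 0 p < d n + e" using infdist_approx[OF Hne e0] unfolding d_def by blast
    have "norm p < sqrt ((d n)^2 + 1 / Suc n)" using p(2) by (simp add: e_def)
    hence "(norm p)^2 < (sqrt ((d n)^2 + 1 / Suc n))^2" by (intro power_strict_mono) auto
    hence "(norm p)^2 < (d n)^2 + 1 / Suc n" by simp
    thus "\<exists>p. p \<in> H n \<and> (norm p)^2 \<le> (d n)^2 + 1 / Suc n" using p(1) by auto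
  qed
  then obtain p where p: "\<And>n. p n \<in> H n" "\<And>n. (norm (p n))^2 \<le> (d n)^2 + 1 / Suc n" by metis
  have key: "(norm (p n - p m))^2 \<le> 2 * ((d m)^2 - (d n)^2) + 2 * (1 / real (Suc n)) + 2 * (1 / real (Suc m))" if nm: "n \<le> m" for n m
  proof -
    have "p m \<in> H n" using p(1)[of m] Hmono[OF nm] by auto
    hence "(1/2) *\<^sub>R p n + (1/2) *\<^sub>R p m \<in> H n" using Hconv[of n] p(1)[of n] by (intro convexD) auto
    hence "d n \<le> norm ((1/2) *\<^sub>R p n + (1/2) *\<^sub>R p m)" by (rule dn_le)
    hence "(d n)^2 \<le> (norm ((1/2) *\<^sub>R p n + (1/2) *\<^sub>R p m))^2" using d0[of n] by (intro power_mono) auto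
    also have "(norm ((1/2) *\<^sub>R p n + (1/2) *\<^sub>R p m))^2 = (norm (p n))^2 / 2 + (norm (p m))^2 / 2 - (norm (p n - p m))^2 / 4"
      by (simp add: power2_norm_eq_inner inner_simps algebra_simps field_simps)
    finally have "(d n)^2 \<le> (norm (p n))^2 / 2 + (norm (p m))^2 / 2 - (norm (p n - p m))^2 / 4" .
    thus ?thesis using p(2)[of n] p(2)[of m] by (rule lin3_aux)
  qed
  have "Cauchy p"
  proof (rule metric_CauchyI)
    fix e :: real assume e: "0 < e"
    have e2: "e^2 / 8 > 0" using e by simp
    obtain N1 where N1: "\<And>m n. m \<ge> N1 \<Longrightarrow> n \<ge> N1 \<Longrightarrow> dist ((d m)^2) ((d n)^2) < e^2 / 8"
      using metric_CauchyD[OF \<open>Cauchy (\<lambda>n. (d n)^2)\<close> e2] by blast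
    obtain N2 :: nat where N2: "8 / e^2 < real N2" using reals_Archimedean2 by blast
    define N where "N = max N1 N2"
    show "\<exists>M. \<forall>m\<ge>M. \<forall>n\<ge>M. dist (p m) (p n) < e"
    proof (intro exI allI impI)
      fix m n assume mn: "N \<le> m" "N \<le> n"
      have inv: "1 / real (Suc k) < e^2 / 8" if "N \<le> k" for k
      proof -
        have "8 / e^2 < real (Suc k)" using N2 that by (simp add: N_def)
        thus ?thesis using e by (simp add: field_simps)
      qed
      have dd: "\<bar>(d m)^2 - (d n)^2\<bar> < e^2 / 8" using N1[of m n] mn by (simp add: N_def dist_real_def)
      have "(norm (p m - p n))^2 < e^2"
      proof (cases "n \<le> m")
        case True
        have "(norm (p m - p n))^2 = (norm (p n - p m))^2" by (simp add: norm_minus_commute)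
        also have "\<dots> \<le> 2 * ((d m)^2 - (d n)^2) + 2 * (1 / real (Suc n)) + 2 * (1 / real (Suc m))" by (rule key[OF True])
        also have "\<dots> < e^2" by (rule lin4_aux) (use dd inv[OF mn(1)] inv[OF mn(2)] in auto)
        finally show ?thesis .
      next
        case False
        have "(norm (p m - p n))^2 \<le> 2 * ((d n)^2 - (d m)^2) + 2 * (1 / real (Suc m)) + 2 * (1 / real (Suc n))" using False by (intro key) auto
        also have "\<dots> < e^2" by (rule lin4_aux) (use dd inv[OF mn(1)] inv[OF mn(2)] in \<open>auto simp: abs_minus_commute\<close>)
        finally show ?thesis .
      qed
      hence "norm (p m - p n) < e" using e by (simp add: power_less_imp_less_base)
      thus "dist (p m) (p n) < e" by (simp add: dist_norm)
    qed
  qed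
  then obtain w where w: "p \<longlonglongrightarrow> w" using Cauchy_convergent_iff convergent_def by blast
  have "w \<in> H n" for n
  proof (rule Lim_in_closed_set[OF Hclosed _ _ w])
    show "eventually (\<lambda>m. p m \<in> H n) sequentially"
      unfolding eventually_sequentially using p(1) Hmono by blast
  qed simp
  thus ?thesis unfolding H_def by blast
qed

lemma inner_conv_S:
  fixes x :: "nat \<Rightarrow> 'a::real_inner"
  assumes c1: "convergent (\<lambda>k. (norm (x k - z1))^2)" and c2: "convergent (\<lambda>k. (norm (x k - z2))^2)"
  shows "convergent (\<lambda>k. (z1 - z2) \<bullet> x k)"
proof -
  have eq: "(z1 - z2) \<bullet> x k = ((norm (x k - z2))^2 - (norm (x k - z1))^2 + (norm z1)^2 - (norm z2)^2) / 2" for k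
    by (simp add: power2_norm_eq_inner inner_simps inner_commute field_simps)
  from c1 c2 obtain l1 l2 where "(\<lambda>k. (norm (x k - z1))^2) \<longlonglongrightarrow> l1" "(\<lambda>k. (norm (x k - z2))^2) \<longlonglongrightarrow> l2"
    unfolding convergent_def by blast
  hence "(\<lambda>k. ((norm (x k - z2))^2 - (norm (x k - z1))^2 + (norm z1)^2 - (norm z2)^2) / 2) \<longlonglongrightarrow> (l2 - l1 + (norm z1)^2 - (norm z2)^2) / 2"
    by (intro tendsto_intros) auto
  thus ?thesis unfolding eq convergent_def by blast
qed

lemma tailhull_limit_eq:
  fixes x :: "nat \<Rightarrow> 'a::real_inner"
  assumes lim: "(\<lambda>k. v \<bullet> x k) \<longlonglongrightarrow> l" and w: "\<forall>n. w \<in> tailhull x A n"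
  shows "v \<bullet> w = l"
proof -
  have "\<bar>v \<bullet> w - l\<bar> \<le> e" if e: "e > 0" for e
  proof -
    obtain N where N: "\<And>k. k \<ge> N \<Longrightarrow> \<bar>v \<bullet> x k - l\<bar> < e"
      using lim e unfolding LIMSEQ_def dist_real_def by blast
    have "v \<bullet> w \<le> l + e" by (rule tailhull_halfspace[OF _ w[rule_format, of N]]) (use N in force)
    moreover have "(- v) \<bullet> w \<le> - l + e" by (rule tailhull_halfspace[OF _ w[rule_format, of N]]) (use N in force)
    ultimately show ?thesis by simp
  qed
  hence "\<bar>v \<bullet> w - l\<bar> \<le> 0" by (metis dense_ge_bounded field_le_epsilon)
  thus ?thesis by simp
qed

lemma weak_conv_abstract:
  fixes x :: "nat \<Rightarrow> 'a::{real_inner,complete_space}" and S :: "'a set"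
  assumes bdd: "\<And>k. norm (x k) \<le> M"
    and nconv: "\<And>z. z \<in> S \<Longrightarrow> convergent (\<lambda>k. (norm (x k - z))^2)"
    and clust: "\<And>w A. infinite A \<Longrightarrow> \<forall>n. w \<in> tailhull x A n \<Longrightarrow> w \<in> S"
  shows "\<exists>z\<in>S. weakly_converges x z"
proof -
  have uniq: "w1 = w2" if w1: "\<forall>n. w1 \<in> tailhull x A1 n" and w2: "\<forall>n. w2 \<in> tailhull x A2 n"
    and A: "infinite A1" "infinite A2" for w1 w2 A1 A2
  proof -
    have S: "w1 \<in> S" "w2 \<in> S" using clust A w1 w2 by auto
    obtain l where l: "(\<lambda>k. (w1 - w2) \<bullet> x k) \<longlonglongrightarrow> l"
      using inner_conv_S[OF nconv[OF S(1)] nconv[OF S(2)]] unfolding convergent_def by blast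
    have "(w1 - w2) \<bullet> w1 = l" "(w1 - w2) \<bullet> w2 = l"
      using tailhull_limit_eq[OF l w1] tailhull_limit_eq[OF l w2] by auto
    hence "(w1 - w2) \<bullet> (w1 - w2) = 0" by (simp add: inner_diff_right)
    thus ?thesis by simp
  qed
  obtain z where z: "\<forall>n. z \<in> tailhull x UNIV n" using nested_inter[where x=x, OF infinite_UNIV_nat bdd] by blast
  have zS: "z \<in> S" using clust[OF infinite_UNIV_nat z] .
  have "(\<lambda>k. x k \<bullet> y) \<longlonglongrightarrow> z \<bullet> y" for y
  proof (rule ccontr)
    assume nt: "\<not> (\<lambda>k. x k \<bullet> y) \<longlonglongrightarrow> z \<bullet> y"
    then obtain e where e: "e > 0" and ne: "\<not> eventually (\<lambda>k. \<bar>x k \<bullet> y - z \<bullet> y\<bar> < e) sequentially"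
      unfolding tendsto_iff dist_real_def by blast
    have inf: "infinite {k. e \<le> \<bar>x k \<bullet> y - z \<bullet> y\<bar>}"
    proof
      assume "finite {k. e \<le> \<bar>x k \<bullet> y - z \<bullet> y\<bar>}"
      then obtain N where "\<forall>k\<in>{k. e \<le> \<bar>x k \<bullet> y - z \<bullet> y\<bar>}. k < N" using finite_nat_bounded by blast
      hence "eventually (\<lambda>k. \<bar>x k \<bullet> y - z \<bullet> y\<bar> < e) sequentially"
        unfolding eventually_sequentially by (metis mem_Collect_eq not_le not_less)
      thus False using ne by simp
    qed
    define Ap where "Ap = {k. z \<bullet> y + e \<le> x k \<bullet> y}"
    define Am where "Am = {k. x k \<bullet> y \<le> z \<bullet> y - e}"
    have "{k. e \<le> \<bar>x k \<bullet> y - z \<bullet> y\<bar>} = Ap \<union> Am" by (auto simp: Ap_def Am_def abs_if)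
    hence "infinite Ap \<or> infinite Am" using inf by auto
    thus False
    proof
      assume A: "infinite Ap"
      obtain w where w: "\<forall>n. w \<in> tailhull x Ap n" using nested_inter[where x=x, OF A bdd] by blast
      have "w = z" using uniq[OF w z A infinite_UNIV_nat] .
      have "(- y) \<bullet> w \<le> - (z \<bullet> y + e)"
        by (rule tailhull_halfspace[OF _ w[rule_format, of 0]]) (auto simp: Ap_def inner_commute)
      thus False using \<open>w = z\<close> e by (simp add: inner_commute)
    next
      assume A: "infinite Am"
      obtain w where w: "\<forall>n. w \<in> tailhull x Am n" using nested_inter[where x=x, OF A bdd] by blast
      have "w = z" using uniq[OF w z A infinite_UNIV_nat] .
      have "y \<bullet> w \<le> z \<bullet> y - e"
        by (rule tailhull_halfspace[OF _ w[rule_format, of 0]]) (auto simp: Am_def inner_commute)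
      thus False using \<open>w = z\<close> e by (simp add: inner_commute)
    qed
  qed
  thus ?thesis using zS unfolding weakly_converges_def by blast
qed

locale fista =
  fixes \<Psi> :: "'a::{real_inner, complete_space} \<Rightarrow> ereal"
    and \<Phi> :: "'a \<Rightarrow> real" and gradPhi :: "'a \<Rightarrow> 'a"
    and L s \<alpha> :: real
    and x g :: "nat \<Rightarrow> 'a"
  assumes proper: "proper_fun \<Psi>" and lsc: "lsc_fun \<Psi>" and cvxPsi: "convex_ereal_fun \<Psi>"
    and cvxPhi: "convex_on UNIV \<Phi>"
    and grad: "\<And>u. (\<Phi> has_derivative (\<lambda>h. gradPhi u \<bullet> h)) (at u)"
    and L_pos: "L > 0"
    and Lip: "\<And>u v. norm (gradPhi u - gradPhi v) \<le> L * norm (u - v)"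
    and S_nonempty: "\<exists>z. \<forall>u. \<Psi> z + ereal (\<Phi> z) \<le> \<Psi> u + ereal (\<Phi> u)"
    and alpha: "\<alpha> > 3"
    and s: "0 < s" "s < 1 / L"
    and scheme: "\<And>k. k \<ge> 1 \<Longrightarrow>
        (let y = x k + ((real k - 1) / (real k + \<alpha> - 1)) *\<^sub>R (x k - x (k - 1))
         in x (k + 1) = prox s \<Psi> (y - s *\<^sub>R (gradPhi y - g k)))"
    and err: "summable (\<lambda>k. real k * norm (g k))"
begin

definition "\<theta> k = (real k - 1) / (real k + \<alpha> - 1)"
definition "yv k = x k + \<theta> k *\<^sub>R (x k - x (k - 1))"
definition "wv k = yv k - s *\<^sub>R (gradPhi (yv k) - g k)"
definition "\<psi> u = real_of_ereal (\<Psi> u)"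
definition "FF u = \<psi> u + \<Phi> u"
definition "Sset = {z. \<forall>u. \<Psi> z + ereal (\<Phi> z) \<le> \<Psi> u + ereal (\<Phi> u)}"
definition "z0 = (SOME z. z \<in> Sset)"
definition "m = FF z0"
definition "W k = FF (x k) - m"
definition "tt k = (real k + \<alpha> - 2) / (\<alpha> - 1)"
definition "U k = x (k - 1) + tt k *\<^sub>R (x k - x (k - 1))"
definition "D k = norm (x k - x (k - 1))"
definition "h k = (D k)^2 / (2 * s)"
definition "Ez z k = (tt k)^2 * W k + (1 / (2 * s)) * (norm (U k - z))^2"
definition "\<rho> k = (tt k)^2 - ((tt (Suc k))^2 - tt (Suc k))"
definition "\<kappa> = (\<alpha> - 3) / (\<alpha> - 1)^2"

lemma ninf: "\<Psi> u \<noteq> -\<infinity>" using proper by (simp add: proper_fun_def)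

lemma z0S: "z0 \<in> Sset"
proof -
  have "\<exists>z. z \<in> Sset" using S_nonempty by (simp add: Sset_def)
  thus ?thesis unfolding z0_def by (rule someI_ex)
qed

lemma fin_of_ninf: "\<Psi> u \<noteq> \<infinity> \<Longrightarrow> \<Psi> u = ereal (\<psi> u)"
  using ninf[of u] by (cases "\<Psi> u") (auto simp: \<psi>_def)

lemma S_fin: assumes "z \<in> Sset" shows "\<Psi> z = ereal (\<psi> z)"
proof -
  obtain v where v: "\<Psi> v \<noteq> \<infinity>" using proper by (auto simp: proper_fun_def)
  have "\<Psi> z + ereal (\<Phi> z) \<le> \<Psi> v + ereal (\<Phi> v)" using assms by (auto simp: Sset_def)
  moreover have "\<Psi> v + ereal (\<Phi> v) < \<infinity>" using v ninf[of v] by (cases "\<Psi> v") auto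
  ultimately have "\<Psi> z \<noteq> \<infinity>" by auto
  thus ?thesis by (rule fin_of_ninf)
qed

lemma S_val: assumes "z \<in> Sset" shows "FF z = m"
proof -
  have "\<Psi> z + ereal (\<Phi> z) \<le> \<Psi> z0 + ereal (\<Phi> z0)" "\<Psi> z0 + ereal (\<Phi> z0) \<le> \<Psi> z + ereal (\<Phi> z)"
    using assms z0S by (auto simp: Sset_def)
  hence "ereal (FF z) \<le> ereal (FF z0)" "ereal (FF z0) \<le> ereal (FF z)"
    using S_fin[OF assms] S_fin[OF z0S] by (auto simp: FF_def)
  thus ?thesis by (simp add: m_def)
qed

lemma m_le: "\<Psi> u + ereal (\<Phi> u) \<ge> ereal m"
proof -
  have "\<Psi> z0 + ereal (\<Phi> z0) \<le> \<Psi> u + ereal (\<Phi> u)" using z0S by (auto simp: Sset_def)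
  thus ?thesis using S_fin[OF z0S] by (simp add: m_def FF_def)
qed

lemma lowerPsi: "ereal (m - \<Phi> 0 - norm (gradPhi 0) * norm v - L / 2 * (norm v)^2) \<le> \<Psi> v"
proof (cases "\<Psi> v = \<infinity>")
  case False
  hence fv: "\<Psi> v = ereal (\<psi> v)" by (rule fin_of_ninf)
  have "m \<le> \<psi> v + \<Phi> v" using m_le[of v] fv by simp
  moreover have "\<Phi> v \<le> \<Phi> 0 + gradPhi 0 \<bullet> (v - 0) + L / 2 * (norm (v - 0))^2"
    by (rule descent_lemma[OF grad Lip])
  moreover have "gradPhi 0 \<bullet> v \<le> norm (gradPhi 0) * norm v" by (rule norm_cauchy_schwarz)
  ultimately show ?thesis using fv by simp
qed simp

lemma sL: "s * L \<le> 1" using s L_pos by (simp add: field_simps)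

lemma prox_ok: "\<Psi> (prox s \<Psi> w) = ereal (\<psi> (prox s \<Psi> w)) \<and>
    (\<forall>v. \<Psi> (prox s \<Psi> w) + ereal ((norm (prox s \<Psi> w - w))^2 / (2 * s))
          \<le> \<Psi> v + ereal ((norm (v - w))^2 / (2 * s)))"
proof -
  have Cq: "L / 2 < 1 / (2 * s)" using s L_pos by (simp add: field_simps)
  have "\<Psi> (prox s \<Psi> w) \<noteq> \<infinity> \<and> \<Psi> (prox s \<Psi> w) \<noteq> -\<infinity> \<and>
    (\<forall>v. \<Psi> (prox s \<Psi> w) + ereal ((norm (prox s \<Psi> w - w))^2 / (2 * s))
          \<le> \<Psi> v + ereal ((norm (v - w))^2 / (2 * s)))"
    by (rule prox_min[OF proper lsc cvxPsi s(1) lowerPsi Cq])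
  thus ?thesis using fin_of_ninf by blast
qed

lemma step: "k \<ge> 1 \<Longrightarrow> x (k + 1) = prox s \<Psi> (wv k)"
  using scheme[of k] by (simp add: Let_def wv_def yv_def \<theta>_def)

lemma xfin: "k \<ge> 2 \<Longrightarrow> \<Psi> (x k) = ereal (\<psi> (x k))"
proof -
  assume k: "k \<ge> 2"
  hence "x k = prox s \<Psi> (wv (k - 1))" using step[of "k - 1"] by simp
  thus ?thesis using prox_ok by simp
qed

lemma key: assumes k: "k \<ge> 1" and u: "\<Psi> u = ereal (\<psi> u)"
  shows "FF (x (k + 1)) \<le> FF u + (1 / s) * ((x (k + 1) - yv k) \<bullet> (u - yv k))
     - (1 / (2 * s)) * (norm (x (k + 1) - yv k))^2 + g k \<bullet> (x (k + 1) - u)"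
proof -
  define P where "P = x (k + 1)"
  have P: "P = prox s \<Psi> (wv k)" using step[OF k] by (simp add: P_def)
  have sub: "\<psi> P \<le> \<psi> u + (1 / s) * ((P - wv k) \<bullet> (u - P))"
  proof -
    have pok: "\<Psi> P = ereal (\<psi> P)" "\<And>v. \<Psi> P + ereal ((norm (P - wv k))^2 / (2 * s)) \<le> \<Psi> v + ereal ((norm (v - wv k))^2 / (2 * s))"
      unfolding P using prox_ok[of "wv k"] by blast+
    show ?thesis by (rule prox_subgrad[OF cvxPsi s(1) pok(1) u pok(2)])
  qed
  have "\<psi> P + \<Phi> P \<le> \<psi> u + \<Phi> u + (1 / s) * ((P - yv k) \<bullet> (u - yv k)) - (1 / (2 * s)) * (norm (P - yv k))^2 + g k \<bullet> (P - u)"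
    by (rule key_ineq[OF cvxPhi grad Lip s(1) sL]) (use sub in \<open>simp add: wv_def\<close>)
  thus ?thesis by (simp add: FF_def P_def)
qed

lemma W_nonneg: "k \<ge> 2 \<Longrightarrow> 0 \<le> W k"
  using m_le[of "x k"] xfin[of k] by (simp add: W_def FF_def)

lemma I1: assumes "k \<ge> 2"
  shows "W (k + 1) \<le> W k + (1 / s) * ((x (k + 1) - yv k) \<bullet> (x k - yv k))
     - (1 / (2 * s)) * (norm (x (k + 1) - yv k))^2 + g k \<bullet> (x (k + 1) - x k)"
  using key[of k "x k"] xfin[OF assms] assms by (simp add: W_def)

lemma I2: assumes "k \<ge> 1" "z \<in> Sset"
  shows "W (k + 1) \<le> (1 / s) * ((x (k + 1) - yv k) \<bullet> (z - yv k))
     - (1 / (2 * s)) * (norm (x (k + 1) - yv k))^2 + g k \<bullet> (x (k + 1) - z)"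
  using key[OF assms(1) S_fin[OF assms(2)]] S_val[OF assms(2)] by (simp add: W_def)

end

context fista begin

lemma a1: "\<alpha> - 1 > 2" using alpha by simp

lemma tt_Suc: "tt (Suc k) = tt k + 1 / (\<alpha> - 1)"
  using a1 by (simp add: tt_def field_simps)

lemma tt_ge1: "k \<ge> 1 \<Longrightarrow> tt k \<ge> 1"
  using a1 by (simp add: tt_def field_simps)

lemma tt_nonneg: "0 \<le> tt k"
  using a1 alpha by (simp add: tt_def)

lemma tt_theta: "(tt k - 1) / tt (Suc k) = \<theta> k"
proof -
  have "tt k - 1 = (real k - 1) / (\<alpha> - 1)" using a1 by (simp add: tt_def field_simps)
  moreover have "tt (Suc k) = (real k + \<alpha> - 1) / (\<alpha> - 1)" using a1 by (simp add: tt_def field_simps)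
  moreover have "real k + \<alpha> - 1 > 0" using alpha by simp
  ultimately show ?thesis using a1 by (simp add: \<theta>_def)
qed

lemma tt_le: "k \<ge> 1 \<Longrightarrow> tt k \<le> (\<alpha> / (\<alpha> - 1)) * real k"
proof -
  assume k: "k \<ge> 1"
  have "real k + \<alpha> - 2 \<le> \<alpha> * real k"
  proof -
    have "(\<alpha> - 1) * 1 \<le> (\<alpha> - 1) * real k" using k a1 by (intro mult_left_mono) auto
    thus ?thesis by (simp add: algebra_simps)
  qed
  hence "tt k \<le> (\<alpha> * real k) / (\<alpha> - 1)" unfolding tt_def using a1 by (intro divide_right_mono) auto
  thus ?thesis by simp
qed

lemma rho_formula: "\<rho> k = (1 - 2 / (\<alpha> - 1)) * tt k + (1 / (\<alpha> - 1) - (1 / (\<alpha> - 1))^2)"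
  unfolding \<rho>_def tt_Suc by (simp add: power2_eq_square algebra_simps)

lemma kappa_pos: "\<kappa> > 0" using alpha by (simp add: \<kappa>_def)

lemma rho_lower: "\<rho> k \<ge> \<kappa> * real k"
proof -
  define c where "c = 1 / (\<alpha> - 1)"
  have c: "0 < c" "c < 1/2" using a1 by (auto simp: c_def field_simps)
  have "c - c^2 \<ge> 0" using c by (simp add: power2_eq_square mult_le_cancel_left1 less_imp_le)
  moreover have "(1 - 2 * c) * tt k \<ge> \<kappa> * real k"
  proof -
    have "tt k \<ge> real k / (\<alpha> - 1)" using a1 alpha by (simp add: tt_def divide_right_mono)
    hence "(1 - 2 * c) * tt k \<ge> (1 - 2 * c) * (real k / (\<alpha> - 1))" using c by (intro mult_left_mono) auto
    moreover have "(1 - 2 * c) * (real k / (\<alpha> - 1)) = \<kappa> * real k"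
      using a1 by (simp add: c_def \<kappa>_def field_simps power2_eq_square)
    ultimately show ?thesis by simp
  qed
  ultimately show ?thesis using rho_formula[of k] unfolding c_def by (simp add: power_one_over)
qed

lemma rho_nonneg: "\<rho> k \<ge> 0" using rho_lower[of k] kappa_pos by (meson mult_nonneg_nonneg of_nat_0_le_iff order_trans less_imp_le)

lemma energy: assumes z: "z \<in> Sset" and k: "k \<ge> 2"
  shows "Ez z (Suc k) + \<rho> k * W k \<le> Ez z k + tt (Suc k) * (norm (g k) * norm (U (Suc k) - z))"
proof -
  have y: "yv k = x k + ((tt k - 1) / tt (Suc k)) *\<^sub>R (x k - x (k - 1))" by (simp add: yv_def tt_theta)
  have T: "tt (Suc k) \<ge> 1" by (rule tt_ge1) simp
  have "(tt (Suc k))^2 * W (Suc k) + (1 / (2 * s)) * (norm (x k + tt (Suc k) *\<^sub>R (x (Suc k) - x k) - z))^2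
     \<le> ((tt (Suc k))^2 - tt (Suc k)) * W k + (1 / (2 * s)) * (norm (x (k - 1) + tt k *\<^sub>R (x k - x (k - 1)) - z))^2
       + tt (Suc k) * (g k \<bullet> (x k + tt (Suc k) *\<^sub>R (x (Suc k) - x k) - z))"
    using energy_step[OF T s(1) y, where a="x (Suc k)" and Wa="W (Suc k)" and Wb="W k" and gk="g k" and z=z] I1[OF k] I2[of k z] z k by simp
  moreover have "g k \<bullet> (U (Suc k) - z) \<le> norm (g k) * norm (U (Suc k) - z)" by (rule norm_cauchy_schwarz)
  hence "tt (Suc k) * (g k \<bullet> (U (Suc k) - z)) \<le> tt (Suc k) * (norm (g k) * norm (U (Suc k) - z))"
    using tt_nonneg by (intro mult_left_mono) auto
  ultimately show ?thesis unfolding Ez_def \<rho>_def U_def by (simp add: algebra_simps)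
qed

lemma g_shift_summable: "summable (\<lambda>n. real (n + 2) * norm (g (n + 2)))"
  using summable_ignore_initial_segment[OF err, of 2] by simp

lemma beta_summable: "summable (\<lambda>n. tt (n + 3) * norm (g (n + 2)))"
proof (rule summable_comparison_test[OF _ summable_mult[OF g_shift_summable, of "\<alpha> / (\<alpha> - 1)"]])
  show "\<exists>N. \<forall>n\<ge>N. norm (tt (n + 3) * norm (g (n + 2))) \<le> \<alpha> / (\<alpha> - 1) * (real (n + 2) * norm (g (n + 2)))"
  proof (intro exI allI impI)
    fix n :: nat
    have "real n + 3 + \<alpha> - 2 \<le> \<alpha> * (real n + 2)"
    proof -
      have "0 \<le> (\<alpha> - 1) * (real n + 1)" using a1 by simp
      thus ?thesis by (simp add: algebra_simps)
    qed
    hence "tt (n + 3) \<le> (\<alpha> * (real n + 2)) / (\<alpha> - 1)" unfolding tt_def using a1 by (intro divide_right_mono) auto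
    hence "tt (n + 3) * norm (g (n + 2)) \<le> (\<alpha> * (real n + 2)) / (\<alpha> - 1) * norm (g (n + 2))"
      by (intro mult_right_mono) auto
    thus "norm (tt (n + 3) * norm (g (n + 2))) \<le> \<alpha> / (\<alpha> - 1) * (real (n + 2) * norm (g (n + 2)))"
      using tt_nonneg[of "n+3"] by (simp add: field_simps)
  qed
qed

lemma Ez_nonneg: "k \<ge> 2 \<Longrightarrow> 0 \<le> Ez z k"
  unfolding Ez_def using W_nonneg[of k] s by simp

lemma lyap: assumes z: "z \<in> Sset"
  shows "\<exists>Rb. (\<forall>k\<ge>2. norm (U k - z) \<le> Rb) \<and> convergent (\<lambda>n. Ez z (n + 2))
    \<and> summable (\<lambda>n. \<rho> (n + 2) * W (n + 2)) \<and> (\<exists>Eb. \<forall>k\<ge>2. (tt k)^2 * W k \<le> Eb)"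
proof -
  define \<beta> where "\<beta> n = tt (n + 3) * norm (g (n + 2))" for n
  define E' where "E' n = Ez z (n + 2)" for n
  define R' where "R' n = norm (U (n + 2) - z)" for n
  have b0: "0 \<le> \<beta> n" for n using tt_nonneg by (simp add: \<beta>_def)
  have sb: "summable \<beta>" unfolding \<beta>_def[abs_def] by (rule beta_summable)
  have stp: "E' (Suc n) + \<rho> (n + 2) * W (n + 2) \<le> E' n + \<beta> n * R' (Suc n)" for n
    using energy[OF z, of "n + 2"] by (simp add: E'_def \<beta>_def R'_def eval_nat_numeral algebra_simps)
  have rw0: "0 \<le> \<rho> (n + 2) * W (n + 2)" for n using rho_nonneg W_nonneg[of "n+2"] by simp
  have E0: "0 \<le> E' n" for n unfolding E'_def by (rule Ez_nonneg) simp
  have R0: "0 \<le> R' n" for n by (simp add: R'_def)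
  have R2: "(R' n)^2 \<le> 2 * s * E' n" for n
    using W_nonneg[of "n+2"] s unfolding E'_def Ez_def R'_def by (simp add: field_simps)
  have Eind: "E' n \<le> E' 0 + (\<Sum>j<n. \<beta> j * R' (Suc j))" for n
  proof (induction n)
    case (Suc n) thus ?case using stp[of n] rw0[of n] by simp
  qed simp
  have H: "(R' n)^2 \<le> 2 * s * E' 0 + (\<Sum>j<n. (2 * s * \<beta> j) * R' (Suc j))" for n
  proof -
    have "(R' n)^2 \<le> 2 * s * (E' 0 + (\<Sum>j<n. \<beta> j * R' (Suc j)))"
      using R2[of n] Eind[of n] s by (meson mult_left_mono order_trans less_imp_le mult_pos_pos zero_less_numeral)
    also have "\<dots> = 2 * s * E' 0 + (\<Sum>j<n. (2 * s * \<beta> j) * R' (Suc j))"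
      by (simp add: algebra_simps sum_distrib_left)
    finally show ?thesis .
  qed
  define Rb where "Rb = suminf (\<lambda>j. 2 * s * \<beta> j) + sqrt (2 * s * E' 0)"
  have RB: "R' n \<le> Rb" for n unfolding Rb_def
    by (rule gronwall_bdd[OF R0 _ _ _ H]) (use b0 s sb E0 in \<open>auto intro: summable_mult\<close>)
  define e where "e n = \<beta> n * Rb" for n
  have Rb0: "0 \<le> Rb" using RB[of 0] R0[of 0] by linarith
  have e0: "0 \<le> e n" for n using b0 Rb0 by (simp add: e_def)
  have se: "summable e" unfolding e_def by (rule summable_mult2[OF sb])
  have stp2: "E' (Suc n) + \<rho> (n + 2) * W (n + 2) \<le> E' n + e n" for n
  proof -
    have "\<beta> n * R' (Suc n) \<le> \<beta> n * Rb" using RB b0 by (intro mult_left_mono) auto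
    thus ?thesis using stp[of n] by (simp add: e_def)
  qed
  have stp3: "E' (Suc n) \<le> E' n + e n" for n using stp2[of n] rw0[of n] by linarith
  have "convergent E'" by (rule qdec_conv[OF E0 stp3 se e0])
  moreover have "summable (\<lambda>n. \<rho> (n + 2) * W (n + 2))" by (rule energy_summable[OF stp2 rw0 E0 se e0])
  moreover have "\<exists>Eb. \<forall>k\<ge>2. (tt k)^2 * W k \<le> Eb"
  proof (intro exI allI impI)
    fix k :: nat assume k: "k \<ge> 2"
    have "E' (k - 2) \<le> E' 0 + suminf e" by (rule energy_bounded[OF stp3 se e0])
    moreover have "(tt k)^2 * W k \<le> E' (k - 2)"
    proof -
      have kk: "k - 2 + 2 = k" using k by simp
      show ?thesis using s unfolding E'_def Ez_def kk by simp
    qed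
    ultimately show "(tt k)^2 * W k \<le> E' 0 + suminf e" by simp
  qed
  moreover have "\<forall>k\<ge>2. norm (U k - z) \<le> Rb"
  proof (intro allI impI)
    fix k :: nat assume "k \<ge> 2"
    hence kk: "k - 2 + 2 = k" by simp
    show "norm (U k - z) \<le> Rb" using RB[of "k - 2"] unfolding R'_def kk .
  qed
  ultimately show ?thesis unfolding E'_def by blast
qed


end

context fista begin

lemma theta_bounds: "k \<ge> 1 \<Longrightarrow> 0 \<le> \<theta> k \<and> \<theta> k \<le> 1"
  using alpha by (simp add: \<theta>_def field_simps)

lemma theta_sq: "(real k + \<alpha> - 1)^2 * (\<theta> k)^2 = (real k - 1)^2"
proof -
  have "real k + \<alpha> - 1 \<noteq> 0" using alpha by simp
  thus ?thesis by (simp add: \<theta>_def power_divide)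
qed

lemma U_Suc: "U (Suc k) = x k + tt (Suc k) *\<^sub>R (x (Suc k) - x k)" by (simp add: U_def)

lemma xbdd: "\<exists>Xb. \<forall>k\<ge>2. norm (x k - z0) \<le> Xb"
proof -
  obtain Rb where Rb: "\<And>k. k \<ge> 2 \<Longrightarrow> norm (U k - z0) \<le> Rb" using lyap[OF z0S] by blast
  define M where "M = max (norm (x 2 - z0)) Rb"
  have "norm (x (n + 2) - z0) \<le> M" for n
  proof (induction n)
    case 0 thus ?case by (simp add: M_def numeral_2_eq_2)
  next
    case (Suc n)
    define k where "k = n + 2"
    define T where "T = tt (Suc k)"
    have T: "T \<ge> 1" unfolding T_def by (rule tt_ge1) simp
    have id: "x (Suc k) - z0 = (1 - 1 / T) *\<^sub>R (x k - z0) + (1 / T) *\<^sub>R (U (Suc k) - z0)"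
    proof -
      have "(1 / T) *\<^sub>R (U (Suc k) - z0) = (1 / T) *\<^sub>R (x k - z0) + (x (Suc k) - x k)"
        using T unfolding U_Suc T_def[symmetric] by (simp add: scaleR_add_right scaleR_diff_right algebra_simps)
      thus ?thesis by (simp add: algebra_simps)
    qed
    have c: "0 \<le> 1 - 1 / T" "0 \<le> 1 / T" using T by auto
    have "norm (x (Suc k) - z0) \<le> (1 - 1 / T) * norm (x k - z0) + (1 / T) * norm (U (Suc k) - z0)"
      unfolding id using c by (metis (no_types) abs_of_nonneg norm_scaleR norm_triangle_ineq)
    also have "\<dots> \<le> (1 - 1 / T) * M + (1 / T) * M"
      using c Suc.IH Rb[of "Suc k"] by (intro add_mono mult_left_mono) (auto simp: k_def M_def)
    also have "\<dots> = M" by (simp add: algebra_simps)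
    finally show ?case by (simp add: k_def)
  qed
  hence "\<forall>k\<ge>2. norm (x k - z0) \<le> M" by (metis le_add_diff_inverse2)
  thus ?thesis by blast
qed

lemma Dbdd: "\<exists>Db. \<forall>k\<ge>2. tt (Suc k) * D (Suc k) \<le> Db"
proof -
  obtain Rb where Rb: "\<And>k. k \<ge> 2 \<Longrightarrow> norm (U k - z0) \<le> Rb" using lyap[OF z0S] by blast
  obtain Xb where Xb: "\<And>k. k \<ge> 2 \<Longrightarrow> norm (x k - z0) \<le> Xb" using xbdd by blast
  have "tt (Suc k) * D (Suc k) \<le> Rb + Xb" if k: "k \<ge> 2" for k
  proof -
    have "tt (Suc k) * D (Suc k) = norm (U (Suc k) - x k)"
      using tt_nonneg[of "Suc k"] by (simp add: D_def U_Suc)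
    also have "U (Suc k) - x k = (U (Suc k) - z0) - (x k - z0)" by simp
    also have "norm \<dots> \<le> norm (U (Suc k) - z0) + norm (x k - z0)" by (rule norm_triangle_ineq4)
    also have "\<dots> \<le> Rb + Xb" using Rb[of "Suc k"] Xb[OF k] k by simp
    finally show ?thesis .
  qed
  thus ?thesis by blast
qed

lemma Dstep: assumes k: "k \<ge> 2"
  shows "W (Suc k) + h (Suc k) \<le> W k + (\<theta> k)^2 * h k + norm (g k) * D (Suc k)"
proof -
  have "W (Suc k) + (norm (x (Suc k) - x k))^2 / (2 * s) \<le> W k + (\<theta> k)^2 * ((norm (x k - x (k - 1)))^2 / (2 * s)) + g k \<bullet> (x (Suc k) - x k)"
    by (rule dstep[OF s(1) yv_def]) (use I1[OF k] in simp)
  moreover have "g k \<bullet> (x (Suc k) - x k) \<le> norm (g k) * D (Suc k)" unfolding D_def by (simp add: norm_cauchy_schwarz)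
  ultimately show ?thesis by (simp add: h_def D_def)
qed

lemma h_nonneg: "0 \<le> h k" using s by (simp add: h_def)

end

context fista begin

definition "Aen k = (real k - 1)^2 * h k + (real k + \<alpha> - 2)^2 * W k"

lemma Astep: assumes k: "k \<ge> 2"
  shows "Aen (Suc k) + (\<alpha> - 1) * (2 * real k + \<alpha> - 1) * h (Suc k)
    \<le> Aen k + (2 * real k + 2 * \<alpha> - 3) * W k + (real k + \<alpha> - 1)^2 * (norm (g k) * D (Suc k))"
proof -
  define q where "q = (real k + \<alpha> - 1)^2"
  have q0: "0 \<le> q" by (simp add: q_def)
  have "q * (W (Suc k) + h (Suc k)) \<le> q * (W k + (\<theta> k)^2 * h k + norm (g k) * D (Suc k))"
    using Dstep[OF k] q0 by (rule mult_left_mono)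
  hence ineq: "q * W (Suc k) + q * h (Suc k) \<le> q * W k + (q * (\<theta> k)^2) * h k + q * (norm (g k) * D (Suc k))"
    by (simp add: algebra_simps)
  have e1: "q * (\<theta> k)^2 = (real k - 1)^2" unfolding q_def by (rule theta_sq)
  have e2: "q = (real k)^2 + (\<alpha> - 1) * (2 * real k + \<alpha> - 1)" by (simp add: q_def power2_eq_square algebra_simps)
  have e3: "q = (real k + \<alpha> - 2)^2 + (2 * real k + 2 * \<alpha> - 3)" by (simp add: q_def power2_eq_square algebra_simps)
  have e4: "Aen (Suc k) = (real k)^2 * h (Suc k) + q * W (Suc k)" by (simp add: Aen_def q_def algebra_simps)
  have "q * h (Suc k) = (real k)^2 * h (Suc k) + (\<alpha> - 1) * (2 * real k + \<alpha> - 1) * h (Suc k)"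
    by (simp add: e2 algebra_simps)
  moreover have "q * W k = (real k + \<alpha> - 2)^2 * W k + (2 * real k + 2 * \<alpha> - 3) * W k"
    by (simp add: e3 algebra_simps)
  moreover have Ak: "Aen k = (real k - 1)^2 * h k + (real k + \<alpha> - 2)^2 * W k" by (simp add: Aen_def)
  ultimately show ?thesis using ineq[unfolded e1] e4 unfolding q_def[symmetric] by linarith
qed

lemma Aen_nonneg: "k \<ge> 2 \<Longrightarrow> 0 \<le> Aen k"
  using W_nonneg[of k] h_nonneg[of k] by (simp add: Aen_def)

lemma rhoW_summable: "summable (\<lambda>n. \<rho> (n + 2) * W (n + 2))"
  using lyap[OF z0S] by blast

lemma weightW_summable: "summable (\<lambda>n. real (n + 2) * W (n + 2))"
proof (rule summable_comparison_test[OF _ summable_mult[OF rhoW_summable, of "1 / \<kappa>"]])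
  show "\<exists>N. \<forall>n\<ge>N. norm (real (n + 2) * W (n + 2)) \<le> 1 / \<kappa> * (\<rho> (n + 2) * W (n + 2))"
  proof (intro exI allI impI)
    fix n :: nat
    have W0: "0 \<le> W (n + 2)" by (rule W_nonneg) simp
    have "\<kappa> * real (n + 2) \<le> \<rho> (n + 2)" by (rule rho_lower)
    hence "real (n + 2) \<le> \<rho> (n + 2) / \<kappa>" using kappa_pos by (simp add: field_simps)
    hence "real (n + 2) * W (n + 2) \<le> (\<rho> (n + 2) / \<kappa>) * W (n + 2)" using W0 by (intro mult_right_mono)
    thus "norm (real (n + 2) * W (n + 2)) \<le> 1 / \<kappa> * (\<rho> (n + 2) * W (n + 2))" using W0 by simp
  qed
qed

lemma gD_summable: "summable (\<lambda>n. (real (n + 2) + \<alpha> - 1)^2 * (norm (g (n + 2)) * D (Suc (n + 2))))"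
proof -
  obtain Db where Db: "\<And>k. k \<ge> 2 \<Longrightarrow> tt (Suc k) * D (Suc k) \<le> Db" using Dbdd by blast
  show ?thesis
  proof (rule summable_comparison_test[OF _ summable_mult[OF g_shift_summable, of "(\<alpha> - 1) * \<alpha> * Db"]])
    show "\<exists>N. \<forall>n\<ge>N. norm ((real (n + 2) + \<alpha> - 1)^2 * (norm (g (n + 2)) * D (Suc (n + 2))))
        \<le> (\<alpha> - 1) * \<alpha> * Db * (real (n + 2) * norm (g (n + 2)))"
    proof (intro exI allI impI)
      fix n :: nat
      define k where "k = n + 2"
      have k: "k \<ge> 2" by (simp add: k_def)
      have t: "real k + \<alpha> - 1 = (\<alpha> - 1) * tt (Suc k)" using a1 by (simp add: tt_def field_simps)
      have kk: "real k + \<alpha> - 1 \<le> \<alpha> * real k"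
      proof -
        have "(\<alpha> - 1) * 1 \<le> (\<alpha> - 1) * real k" using k a1 by (intro mult_left_mono) auto
        thus ?thesis by (simp add: algebra_simps)
      qed
      have D0: "0 \<le> D (Suc k)" by (simp add: D_def)
      have pos: "0 \<le> real k + \<alpha> - 1" using alpha by simp
      have rD: "(real k + \<alpha> - 1) * D (Suc k) = (\<alpha> - 1) * (tt (Suc k) * D (Suc k))" unfolding t by simp
      have "(real k + \<alpha> - 1)^2 * (norm (g k) * D (Suc k)) = (real k + \<alpha> - 1) * norm (g k) * ((real k + \<alpha> - 1) * D (Suc k))"
        by (simp add: power2_eq_square algebra_simps)
      also have "\<dots> = (real k + \<alpha> - 1) * norm (g k) * ((\<alpha> - 1) * (tt (Suc k) * D (Suc k)))" by (simp only: rD)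
      also have "\<dots> \<le> (\<alpha> * real k) * norm (g k) * ((\<alpha> - 1) * Db)"
      proof (rule mult_mono)
        show "(real k + \<alpha> - 1) * norm (g k) \<le> (\<alpha> * real k) * norm (g k)" using kk by (intro mult_right_mono) auto
        show "(\<alpha> - 1) * (tt (Suc k) * D (Suc k)) \<le> (\<alpha> - 1) * Db" using Db[OF k] a1 by (intro mult_left_mono) auto
        show "0 \<le> (\<alpha> * real k) * norm (g k)" using alpha by simp
        show "0 \<le> (\<alpha> - 1) * (tt (Suc k) * D (Suc k))" using a1 tt_nonneg[of "Suc k"] D0 by simp
      qed
      also have "\<dots> = (\<alpha> - 1) * \<alpha> * Db * (real k * norm (g k))" by (simp add: algebra_simps)
      finally show "norm ((real (n + 2) + \<alpha> - 1)^2 * (norm (g (n + 2)) * D (Suc (n + 2))))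
        \<le> (\<alpha> - 1) * \<alpha> * Db * (real (n + 2) * norm (g (n + 2)))"
        using pos D0 by (simp add: k_def)
    qed
  qed
qed

lemma h_summable: "summable (\<lambda>n. real (n + 2) * h (n + 3))"
proof -
  define c where "c n = (\<alpha> - 1) * (2 * real (n + 2) + \<alpha> - 1) * h (Suc (n + 2))" for n
  define e where "e n = (2 * real (n + 2) + 2 * \<alpha> - 3) * W (n + 2)
      + (real (n + 2) + \<alpha> - 1)^2 * (norm (g (n + 2)) * D (Suc (n + 2)))" for n
  have c0: "0 \<le> c n" for n using a1 h_nonneg alpha unfolding c_def by (intro mult_nonneg_nonneg) auto
  have e0: "0 \<le> e n" for n unfolding e_def using W_nonneg[of "n+2"] alpha
    by (intro add_nonneg_nonneg mult_nonneg_nonneg) (auto simp: D_def)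
  have se: "summable e"
  proof -
    have "summable (\<lambda>n. (2 * real (n + 2) + 2 * \<alpha> - 3) * W (n + 2))"
    proof (rule summable_comparison_test[OF _ summable_mult[OF weightW_summable, of "2 * \<alpha>"]])
      show "\<exists>N. \<forall>n\<ge>N. norm ((2 * real (n + 2) + 2 * \<alpha> - 3) * W (n + 2)) \<le> 2 * \<alpha> * (real (n + 2) * W (n + 2))"
      proof (intro exI allI impI)
        fix n :: nat
        have W0: "0 \<le> W (n + 2)" by (rule W_nonneg) simp
        have "2 * real (n + 2) + 2 * \<alpha> - 3 \<le> 2 * \<alpha> * real (n + 2)"
        proof -
          have "(2 * \<alpha> - 2) * 2 \<le> (2 * \<alpha> - 2) * real (n + 2)" using a1 by (intro mult_left_mono) auto
          thus ?thesis using alpha by (simp add: algebra_simps)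
        qed
        hence "(2 * real (n + 2) + 2 * \<alpha> - 3) * W (n + 2) \<le> 2 * \<alpha> * real (n + 2) * W (n + 2)"
          using W0 by (intro mult_right_mono)
        moreover have "0 \<le> (2 * real (n + 2) + 2 * \<alpha> - 3) * W (n + 2)" using W0 alpha by simp
        ultimately show "norm ((2 * real (n + 2) + 2 * \<alpha> - 3) * W (n + 2)) \<le> 2 * \<alpha> * (real (n + 2) * W (n + 2))"
          by (simp add: algebra_simps)
      qed
    qed
    thus ?thesis unfolding e_def[abs_def] by (intro summable_add gD_summable)
  qed
  have stp: "Aen (Suc (n + 2)) + c n \<le> Aen (n + 2) + e n" for n
    using Astep[of "n + 2"] by (simp add: c_def e_def algebra_simps)
  have A0: "0 \<le> Aen (n + 2)" for n by (rule Aen_nonneg) simp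
  have "summable c"
    by (rule energy_summable[where E = "\<lambda>n. Aen (n + 2)"]) (use stp c0 A0 se e0 in auto)
  thus ?thesis
  proof (rule summable_comparison_test[rotated])
    show "\<exists>N. \<forall>n\<ge>N. norm (real (n + 2) * h (n + 3)) \<le> c n"
    proof (intro exI allI impI)
      fix n :: nat
      have "real (n + 2) \<le> (\<alpha> - 1) * (2 * real (n + 2) + \<alpha> - 1)"
      proof -
        define r where "r = real (n + 2)"
        have r0: "0 \<le> r" by (simp add: r_def)
        have "1 * (2 * r + \<alpha> - 1) \<le> (\<alpha> - 1) * (2 * r + \<alpha> - 1)"
          using a1 alpha r0 by (intro mult_right_mono) auto
        moreover have "r \<le> 2 * r + \<alpha> - 1" using alpha r0 by linarith
        ultimately have "r \<le> (\<alpha> - 1) * (2 * r + \<alpha> - 1)" by simp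
        thus ?thesis by (simp add: r_def)
      qed
      hence "real (n + 2) * h (n + 3) \<le> (\<alpha> - 1) * (2 * real (n + 2) + \<alpha> - 1) * h (n + 3)"
        using h_nonneg by (intro mult_right_mono)
      thus "norm (real (n + 2) * h (n + 3)) \<le> c n" using h_nonneg[of "n+3"] by (simp add: c_def eval_nat_numeral)
    qed
  qed
qed

end

context fista begin

definition "V k = W k + h k"

lemma V_nonneg: "k \<ge> 2 \<Longrightarrow> 0 \<le> V k" using W_nonneg h_nonneg by (simp add: V_def add_nonneg_nonneg)

lemma Vstep: assumes k: "k \<ge> 2" shows "V (Suc k) \<le> V k + norm (g k) * D (Suc k)"
proof -
  have "(\<theta> k)^2 \<le> 1" using theta_bounds[of k] k by (simp add: power_le_one)
  hence "(\<theta> k)^2 * h k \<le> 1 * h k" using h_nonneg by (intro mult_right_mono)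
  thus ?thesis using Dstep[OF k] by (simp add: V_def)
qed

lemma aVstep: assumes k: "k \<ge> 2"
  shows "(real (Suc k))^2 * V (Suc k) \<le> (real k)^2 * V k + ((2 * real k + 1) * V k + (real (Suc k))^2 * (norm (g k) * D (Suc k)))"
proof -
  have "(real (Suc k))^2 * V (Suc k) \<le> (real (Suc k))^2 * (V k + norm (g k) * D (Suc k))"
    using Vstep[OF k] by (intro mult_left_mono) auto
  also have "\<dots> = (real k)^2 * V k + ((2 * real k + 1) * V k + (real (Suc k))^2 * (norm (g k) * D (Suc k)))"
    by (simp add: power2_eq_square algebra_simps)
  finally show ?thesis .
qed

lemma eps_summable: "summable (\<lambda>n. (2 * real (n + 2) + 1) * V (n + 2) + (real (Suc (n + 2)))^2 * (norm (g (n + 2)) * D (Suc (n + 2))))"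
proof (intro summable_add)
  have sW: "summable (\<lambda>n. (2 * real (n + 2) + 1) * W (n + 2))"
  proof (rule summable_comparison_test[OF _ summable_mult[OF weightW_summable, of 3]])
    show "\<exists>N. \<forall>n\<ge>N. norm ((2 * real (n + 2) + 1) * W (n + 2)) \<le> 3 * (real (n + 2) * W (n + 2))"
    proof (intro exI allI impI)
      fix n :: nat
      have W0: "0 \<le> W (n + 2)" by (rule W_nonneg) simp
      have ineq: "(2 * real (n + 2) + 1) * W (n + 2) \<le> (3 * real (n + 2)) * W (n + 2)" using W0 by (intro mult_right_mono) auto
      have eq: "norm ((2 * real (n + 2) + 1) * W (n + 2)) = (2 * real (n + 2) + 1) * W (n + 2)" using W0 by simp
      have eq2: "3 * (real (n + 2) * W (n + 2)) = (3 * real (n + 2)) * W (n + 2)" by simp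
      show "norm ((2 * real (n + 2) + 1) * W (n + 2)) \<le> 3 * (real (n + 2) * W (n + 2))" unfolding eq eq2 by (rule ineq)
    qed
  qed
  have sh: "summable (\<lambda>n. (2 * real (n + 2) + 1) * h (n + 2))"
  proof -
    have "summable (\<lambda>n. (2 * real (Suc n + 2) + 1) * h (Suc n + 2))"
    proof (rule summable_comparison_test[OF _ summable_mult[OF h_summable, of 4]])
      show "\<exists>N. \<forall>n\<ge>N. norm ((2 * real (Suc n + 2) + 1) * h (Suc n + 2)) \<le> 4 * (real (n + 2) * h (n + 3))"
      proof (intro exI allI impI)
        fix n :: nat
        have e: "Suc n + 2 = n + 3" by simp
        have ineq: "(2 * real (n + 3) + 1) * h (n + 3) \<le> (4 * real (n + 2)) * h (n + 3)" using h_nonneg by (intro mult_right_mono) auto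
        have eq: "norm ((2 * real (n + 3) + 1) * h (n + 3)) = (2 * real (n + 3) + 1) * h (n + 3)" using h_nonneg[of "n+3"] by simp
        have eq2: "4 * (real (n + 2) * h (n + 3)) = (4 * real (n + 2)) * h (n + 3)" by simp
        show "norm ((2 * real (Suc n + 2) + 1) * h (Suc n + 2)) \<le> 4 * (real (n + 2) * h (n + 3))"
          unfolding e eq eq2 by (rule ineq)
      qed
    qed
    thus ?thesis by (subst summable_Suc_iff[symmetric])
  qed
  show "summable (\<lambda>n. (2 * real (n + 2) + 1) * V (n + 2))"
    using summable_add[OF sW sh] by (simp add: V_def algebra_simps)
  show "summable (\<lambda>n. (real (Suc (n + 2)))^2 * (norm (g (n + 2)) * D (Suc (n + 2))))"
  proof (rule summable_comparison_test[OF _ gD_summable])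
    show "\<exists>N. \<forall>n\<ge>N. norm ((real (Suc (n + 2)))^2 * (norm (g (n + 2)) * D (Suc (n + 2))))
        \<le> (real (n + 2) + \<alpha> - 1)^2 * (norm (g (n + 2)) * D (Suc (n + 2)))"
    proof (intro exI allI impI)
      fix n :: nat
      have "real (Suc (n + 2)) \<le> real (n + 2) + \<alpha> - 1" using alpha by simp
      hence "(real (Suc (n + 2)))^2 \<le> (real (n + 2) + \<alpha> - 1)^2" by (intro power_mono) auto
      hence "(real (Suc (n + 2)))^2 * (norm (g (n + 2)) * D (Suc (n + 2))) \<le> (real (n + 2) + \<alpha> - 1)^2 * (norm (g (n + 2)) * D (Suc (n + 2)))"
        by (intro mult_right_mono) (auto simp: D_def)
      thus "norm ((real (Suc (n + 2)))^2 * (norm (g (n + 2)) * D (Suc (n + 2))))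
        \<le> (real (n + 2) + \<alpha> - 1)^2 * (norm (g (n + 2)) * D (Suc (n + 2)))" by (simp add: D_def)
    qed
  qed
qed

lemma kV_summable: "summable (\<lambda>n. real (n + 2) * V (n + 2))"
proof (rule summable_comparison_test[OF _ eps_summable])
  show "\<exists>N. \<forall>n\<ge>N. norm (real (n + 2) * V (n + 2)) \<le> (2 * real (n + 2) + 1) * V (n + 2) + (real (Suc (n + 2)))^2 * (norm (g (n + 2)) * D (Suc (n + 2)))"
  proof (intro exI allI impI)
    fix n :: nat
    have V0: "0 \<le> V (n + 2)" by (rule V_nonneg) simp
    have "real (n + 2) * V (n + 2) \<le> (2 * real (n + 2) + 1) * V (n + 2)" using V0 by (intro mult_right_mono) auto
    moreover have "0 \<le> (real (Suc (n + 2)))^2 * (norm (g (n + 2)) * D (Suc (n + 2)))" by (simp add: D_def)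
    ultimately show "norm (real (n + 2) * V (n + 2)) \<le> (2 * real (n + 2) + 1) * V (n + 2) + (real (Suc (n + 2)))^2 * (norm (g (n + 2)) * D (Suc (n + 2)))"
      using V0 by simp
  qed
qed

lemma k2V_lim: "(\<lambda>n. (real (n + 2))^2 * V (n + 2)) \<longlonglongrightarrow> 0"
proof -
  define a where "a n = (real (n + 2))^2 * V (n + 2)" for n
  define \<epsilon> where "\<epsilon> n = (2 * real (n + 2) + 1) * V (n + 2) + (real (Suc (n + 2)))^2 * (norm (g (n + 2)) * D (Suc (n + 2)))" for n
  have a0: "0 \<le> a n" for n using V_nonneg[of "n+2"] by (simp add: a_def)
  have e0: "0 \<le> \<epsilon> n" for n using V_nonneg[of "n+2"] by (simp add: \<epsilon>_def D_def)
  have stp: "a (Suc n) \<le> a n + \<epsilon> n" for n using aVstep[of "n + 2"] by (simp add: a_def \<epsilon>_def)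
  have se: "summable \<epsilon>" unfolding \<epsilon>_def[abs_def] by (rule eps_summable)
  obtain l where l: "a \<longlonglongrightarrow> l" using qdec_conv[OF a0 stp se e0] by (auto simp: convergent_def)
  define Vz where "Vz k = (if k \<ge> 2 then V k else 0)" for k
  have "l = 0"
  proof (rule harm_zero[of Vz])
    show "0 \<le> Vz k" for k using V_nonneg by (simp add: Vz_def)
    show "summable (\<lambda>k. real k * Vz k)"
      using kV_summable by (subst summable_iff_shift[symmetric, of _ 2]) (simp add: Vz_def)
    show "(\<lambda>k. (real k)^2 * Vz k) \<longlonglongrightarrow> l"
      by (rule LIMSEQ_offset[where k = 2]) (use l in \<open>simp add: a_def[abs_def] Vz_def\<close>)
  qed
  thus ?thesis using l by (simp add: a_def[abs_def])
qed

lemma k2W_lim: "(\<lambda>k. (real k)^2 * W k) \<longlonglongrightarrow> 0"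
proof (rule LIMSEQ_offset[where k = 2], rule tendsto_sandwich[OF _ _ tendsto_const k2V_lim])
  show "eventually (\<lambda>n. 0 \<le> (real (n + 2))^2 * W (n + 2)) sequentially" using W_nonneg by simp
  show "eventually (\<lambda>n. (real (n + 2))^2 * W (n + 2) \<le> (real (n + 2))^2 * V (n + 2)) sequentially"
    using h_nonneg by (simp add: V_def)
qed

lemma kD_lim: "(\<lambda>k. real k * D k) \<longlonglongrightarrow> 0"
proof (rule LIMSEQ_offset[where k = 2])
  have h2: "(\<lambda>n. (real (n + 2))^2 * h (n + 2)) \<longlonglongrightarrow> 0"
  proof (rule tendsto_sandwich[OF _ _ tendsto_const k2V_lim])
    show "eventually (\<lambda>n. 0 \<le> (real (n + 2))^2 * h (n + 2)) sequentially" using h_nonneg by simp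
    show "eventually (\<lambda>n. (real (n + 2))^2 * h (n + 2) \<le> (real (n + 2))^2 * V (n + 2)) sequentially"
      using W_nonneg by (simp add: V_def)
  qed
  have "(\<lambda>n. sqrt (2 * s * ((real (n + 2))^2 * h (n + 2)))) \<longlonglongrightarrow> sqrt (2 * s * 0)"
    by (intro tendsto_intros h2)
  moreover have "sqrt (2 * s * ((real (n + 2))^2 * h (n + 2))) = real (n + 2) * D (n + 2)" for n
  proof -
    have "2 * s * ((real (n + 2))^2 * h (n + 2)) = (real (n + 2) * D (n + 2))^2"
      using s by (simp add: h_def power_mult_distrib)
    thus ?thesis by (simp add: D_def)
  qed
  ultimately show "(\<lambda>n. real (n + 2) * D (n + 2)) \<longlonglongrightarrow> 0" by simp
qed

lemma kDs_lim: "(\<lambda>k. real k * norm (x (k + 1) - x k)) \<longlonglongrightarrow> 0"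
proof (rule tendsto_sandwich[OF _ _ tendsto_const LIMSEQ_Suc[OF kD_lim]])
  show "eventually (\<lambda>k. 0 \<le> real k * norm (x (k + 1) - x k)) sequentially" by simp
  show "eventually (\<lambda>k. real k * norm (x (k + 1) - x k) \<le> real (Suc k) * D (Suc k)) sequentially"
    by (simp add: D_def mult_right_mono)
qed

end

context fista begin

lemma ttD_lim0: "(\<lambda>k. \<alpha> / (\<alpha> - 1) * (real k * D k)) \<longlonglongrightarrow> 0"
  using tendsto_mult[OF tendsto_const kD_lim, of "\<alpha> / (\<alpha> - 1)"] by simp

lemma ttD_lim: "(\<lambda>k. tt k * D k) \<longlonglongrightarrow> 0"
proof (rule tendsto_sandwich[OF _ _ tendsto_const ttD_lim0])
  show "eventually (\<lambda>k. 0 \<le> tt k * D k) sequentially" using tt_nonneg by (simp add: D_def)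
  show "eventually (\<lambda>k. tt k * D k \<le> \<alpha> / (\<alpha> - 1) * (real k * D k)) sequentially"
    using eventually_ge_at_top[of "1::nat"]
  proof eventually_elim
    case (elim k)
    have "tt k * D k \<le> (\<alpha> / (\<alpha> - 1) * real k) * D k" using tt_le[OF elim] by (intro mult_right_mono) (auto simp: D_def)
    thus ?case by simp
  qed
qed

lemma norm_conv: assumes z: "z \<in> Sset" shows "convergent (\<lambda>k. (norm (x k - z))^2)"
proof -
  obtain Rb where lz: "convergent (\<lambda>n. Ez z (n + 2))" using lyap[OF z] by blast
  obtain Xb where Xb: "\<And>k. k \<ge> 2 \<Longrightarrow> norm (x k - z0) \<le> Xb" using xbdd by blast
  define B where "B = Xb + norm (z0 - z)"
  have xB: "norm (x k - z) \<le> B" if "k \<ge> 2" for k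
  proof -
    have "x k - z = (x k - z0) + (z0 - z)" by simp
    hence "norm (x k - z) \<le> norm (x k - z0) + norm (z0 - z)" by (metis norm_triangle_ineq)
    thus ?thesis using Xb[OF that] by (simp add: B_def)
  qed
  have tW: "(\<lambda>n. (tt (n + 2))^2 * W (n + 2)) \<longlonglongrightarrow> 0"
  proof (rule tendsto_sandwich[OF _ _ tendsto_const])
    show "eventually (\<lambda>n. 0 \<le> (tt (n + 2))^2 * W (n + 2)) sequentially" using W_nonneg by simp
    show "eventually (\<lambda>n. (tt (n + 2))^2 * W (n + 2) \<le> (\<alpha> / (\<alpha> - 1))^2 * ((real (n + 2))^2 * W (n + 2))) sequentially"
    proof (intro always_eventually allI)
      fix n :: nat
      have "tt (n + 2) \<le> \<alpha> / (\<alpha> - 1) * real (n + 2)" by (rule tt_le) simp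
      hence "(tt (n + 2))^2 \<le> (\<alpha> / (\<alpha> - 1) * real (n + 2))^2" using tt_nonneg by (intro power_mono) auto
      hence "(tt (n + 2))^2 * W (n + 2) \<le> (\<alpha> / (\<alpha> - 1) * real (n + 2))^2 * W (n + 2)"
        using W_nonneg[of "n+2"] by (intro mult_right_mono) auto
      moreover have eq: "(\<alpha> / (\<alpha> - 1))^2 * ((real (n + 2))^2 * W (n + 2)) = (\<alpha> / (\<alpha> - 1) * real (n + 2))^2 * W (n + 2)"
        by (simp only: power_mult_distrib mult.assoc)
      ultimately show "(tt (n + 2))^2 * W (n + 2) \<le> (\<alpha> / (\<alpha> - 1))^2 * ((real (n + 2))^2 * W (n + 2))"
        by (simp only:)
    qed
    have "(\<lambda>n. (real (n + 2))^2 * W (n + 2)) \<longlonglongrightarrow> 0" using LIMSEQ_ignore_initial_segment[OF k2W_lim, of 2] by simp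
    thus "(\<lambda>n. (\<alpha> / (\<alpha> - 1))^2 * ((real (n + 2))^2 * W (n + 2))) \<longlonglongrightarrow> 0"
      using tendsto_mult[OF tendsto_const, of _ 0 sequentially "(\<alpha> / (\<alpha> - 1))^2"] by simp
  qed
  obtain lE where lE: "(\<lambda>n. Ez z (n + 2)) \<longlonglongrightarrow> lE" using lz by (auto simp: convergent_def)
  have "(\<lambda>n. 2 * s * (Ez z (n + 2) - (tt (n + 2))^2 * W (n + 2))) \<longlonglongrightarrow> 2 * s * (lE - 0)"
    by (intro tendsto_intros lE tW)
  moreover have "2 * s * (Ez z (n + 2) - (tt (n + 2))^2 * W (n + 2)) = (norm (U (n + 2) - z))^2" for n
    using s by (simp add: Ez_def)
  ultimately have uc: "(\<lambda>n. (norm (U (n + 2) - z))^2) \<longlonglongrightarrow> 2 * s * lE" by simp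
  hence uc3: "(\<lambda>n. (norm (U (n + 3) - z))^2) \<longlonglongrightarrow> 2 * s * lE"
    using LIMSEQ_ignore_initial_segment[OF uc, of 1] by (simp add: eval_nat_numeral)
  define dl where "dl n = (norm (U (n + 3) - z))^2 - (norm (x (n + 2) - z))^2" for n
  define td where "td n = tt (n + 3) * D (n + 3)" for n
  have tdl: "td \<longlonglongrightarrow> 0" unfolding td_def using LIMSEQ_ignore_initial_segment[OF ttD_lim, of 3] by simp
  have dlb: "norm (dl n) \<le> 2 * td n * B + (td n)^2" for n
  proof -
    define a where "a = x (n + 2) - z"
    define b where "b = tt (n + 3) *\<^sub>R (x (n + 3) - x (n + 2))"
    have U3: "U (n + 3) - z = a + b" by (simp add: U_def a_def b_def eval_nat_numeral)
    have nb: "norm b = td n" using tt_nonneg[of "n+3"] by (simp add: b_def td_def D_def eval_nat_numeral)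
    have "dl n = 2 * (a \<bullet> b) + (norm b)^2"
      unfolding dl_def U3 a_def[symmetric] by (simp add: power2_norm_eq_inner inner_add_left inner_add_right inner_commute)
    moreover have "\<bar>2 * (a \<bullet> b) + (norm b)^2\<bar> \<le> \<bar>2 * (a \<bullet> b)\<bar> + \<bar>(norm b)^2\<bar>" by (rule abs_triangle_ineq)
    ultimately have "norm (dl n) \<le> 2 * \<bar>a \<bullet> b\<bar> + (norm b)^2" by (simp add: abs_mult)
    moreover have "\<bar>a \<bullet> b\<bar> \<le> norm a * norm b" by (rule Cauchy_Schwarz_ineq2)
    moreover have "norm a * norm b \<le> B * norm b" using xB[of "n+2"] by (intro mult_right_mono) (auto simp: a_def)
    ultimately have "norm (dl n) \<le> 2 * (B * norm b) + (norm b)^2" by linarith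
    thus ?thesis using nb by (simp add: algebra_simps)
  qed
  have "(\<lambda>n. 2 * td n * B + (td n)^2) \<longlonglongrightarrow> 2 * 0 * B + 0^2" by (intro tendsto_intros tdl)
  hence bl: "(\<lambda>n. 2 * td n * B + (td n)^2) \<longlonglongrightarrow> 0" by simp
  have ev: "eventually (\<lambda>n. norm (dl n) \<le> 2 * td n * B + (td n)^2) sequentially"
    by (rule always_eventually) (use dlb in blast)
  have "dl \<longlonglongrightarrow> 0" by (rule Lim_null_comparison[OF ev bl])
  hence "(\<lambda>n. (norm (U (n + 3) - z))^2 - dl n) \<longlonglongrightarrow> 2 * s * lE - 0" by (intro tendsto_intros uc3)
  hence "(\<lambda>n. (norm (x (n + 2) - z))^2) \<longlonglongrightarrow> 2 * s * lE" by (simp add: dl_def)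
  hence "convergent (\<lambda>n. (norm (x (n + 2) - z))^2)" by (auto simp: convergent_def)
  thus ?thesis by (subst convergent_ignore_initial_segment[symmetric, of _ 2])
qed

end

context fista begin

lemma Phi_cont: "isCont \<Phi> u"
  using has_derivative_continuous[OF grad[of u]] by (simp add: continuous_at)

lemma W_lim: "W \<longlonglongrightarrow> 0"
proof (rule LIMSEQ_offset[where k = 2], rule tendsto_sandwich[OF _ _ tendsto_const])
  show "eventually (\<lambda>n. 0 \<le> W (n + 2)) sequentially" using W_nonneg by simp
  show "eventually (\<lambda>n. W (n + 2) \<le> (real (n + 2))^2 * W (n + 2)) sequentially"
  proof (intro always_eventually allI)
    fix n :: nat
    have "1 * W (n + 2) \<le> (real (n + 2))^2 * W (n + 2)"
      using W_nonneg[of "n+2"] one_le_power[of "real (n+2)" 2] by (intro mult_right_mono) auto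
    thus "W (n + 2) \<le> (real (n + 2))^2 * W (n + 2)" by simp
  qed
  show "(\<lambda>n. (real (n + 2))^2 * W (n + 2)) \<longlonglongrightarrow> 0" using LIMSEQ_ignore_initial_segment[OF k2W_lim, of 2] by simp
qed

lemma sublevel_convex: "convex {u. \<Psi> u + ereal (\<Phi> u) \<le> ereal c}"
proof (rule convexI)
  fix a b :: 'a and p q :: real
  assume a: "a \<in> {u. \<Psi> u + ereal (\<Phi> u) \<le> ereal c}" and b: "b \<in> {u. \<Psi> u + ereal (\<Phi> u) \<le> ereal c}"
    and pq: "0 \<le> p" "0 \<le> q" "p + q = 1"
  have fa: "\<Psi> a = ereal (\<psi> a)" using a by (intro fin_of_ninf) auto
  have fb: "\<Psi> b = ereal (\<psi> b)" using b by (intro fin_of_ninf) auto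
  have ra: "\<psi> a + \<Phi> a \<le> c" using a fa by simp
  have rb: "\<psi> b + \<Phi> b \<le> c" using b fb by simp
  have p: "p = 1 - q" using pq by simp
  have "\<Psi> ((1 - q) *\<^sub>R a + q *\<^sub>R b) \<le> ereal (1 - q) * \<Psi> a + ereal q * \<Psi> b"
    using cvxPsi pq unfolding convex_ereal_fun_def by auto
  hence P1: "\<Psi> (p *\<^sub>R a + q *\<^sub>R b) \<le> ereal (p * \<psi> a + q * \<psi> b)" using fa fb p by simp
  have P2: "\<Phi> (p *\<^sub>R a + q *\<^sub>R b) \<le> p * \<Phi> a + q * \<Phi> b"
    using cvxPhi pq unfolding convex_on_def by auto
  have "p * (\<psi> a + \<Phi> a) + q * (\<psi> b + \<Phi> b) \<le> p * c + q * c"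
    using ra rb pq by (intro add_mono mult_left_mono) auto
  moreover have "p * (\<psi> a + \<Phi> a) + q * (\<psi> b + \<Phi> b) = p * \<psi> a + q * \<psi> b + (p * \<Phi> a + q * \<Phi> b)"
    by (simp add: algebra_simps)
  moreover have "p * c + q * c = c" using pq(3) by (metis distrib_right mult_1)
  ultimately have R: "p * \<psi> a + q * \<psi> b + (p * \<Phi> a + q * \<Phi> b) \<le> c" by linarith
  have "\<Psi> (p *\<^sub>R a + q *\<^sub>R b) + ereal (\<Phi> (p *\<^sub>R a + q *\<^sub>R b)) \<le> ereal (p * \<psi> a + q * \<psi> b) + ereal (p * \<Phi> a + q * \<Phi> b)"
    using P1 P2 by (intro add_mono) auto
  also have "\<dots> \<le> ereal c" using R by simp
  finally show "p *\<^sub>R a + q *\<^sub>R b \<in> {u. \<Psi> u + ereal (\<Phi> u) \<le> ereal c}" by simp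
qed

lemma sublevel_closed: "closed {u. \<Psi> u + ereal (\<Phi> u) \<le> ereal c}"
  unfolding closed_sequential_limits
proof (intro allI impI, elim conjE)
  fix f :: "nat \<Rightarrow> 'a" and l
  assume f: "\<forall>n. f n \<in> {u. \<Psi> u + ereal (\<Phi> u) \<le> ereal c}" and fl: "f \<longlonglongrightarrow> l"
  have le: "\<Psi> (f n) \<le> ereal (c - \<Phi> (f n))" for n
  proof -
    have fn: "\<Psi> (f n) + ereal (\<Phi> (f n)) \<le> ereal c" using f by auto
    moreover have "\<Psi> (f n) = ereal (\<psi> (f n))" using fn by (intro fin_of_ninf) auto
    ultimately show ?thesis by simp
  qed
  have "(\<lambda>n. c - \<Phi> (f n)) \<longlonglongrightarrow> c - \<Phi> l" by (intro tendsto_intros isCont_tendsto_compose[OF Phi_cont fl])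
  hence "\<Psi> l \<le> ereal (c - \<Phi> l)" by (rule lsc_seq[OF lsc fl le])
  hence "\<Psi> l + ereal (\<Phi> l) \<le> ereal (c - \<Phi> l) + ereal (\<Phi> l)" by (rule add_right_mono)
  thus "l \<in> {u. \<Psi> u + ereal (\<Phi> u) \<le> ereal c}" by simp
qed

lemma cluster: assumes w: "\<forall>n. w \<in> tailhull x A n" shows "w \<in> Sset"
proof -
  have wle: "\<Psi> w + ereal (\<Phi> w) \<le> ereal (m + e)" if e: "e > 0" for e
  proof -
    obtain N where N: "\<And>k. k \<ge> N \<Longrightarrow> \<bar>W k - 0\<bar> < e" using W_lim e unfolding LIMSEQ_def dist_real_def by blast
    have "tailhull x A (max N 2) \<subseteq> {u. \<Psi> u + ereal (\<Phi> u) \<le> ereal (m + e)}"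
    proof (rule tailhull_closed_convex[OF _ sublevel_closed sublevel_convex])
      fix k assume "k \<in> A" "max N 2 \<le> k"
      hence k: "k \<ge> N" "k \<ge> 2" by auto
      have "\<Psi> (x k) + ereal (\<Phi> (x k)) = ereal (m + W k)" using xfin[OF k(2)] by (simp add: W_def FF_def)
      also have "\<dots> \<le> ereal (m + e)" using N[OF k(1)] by simp
      finally show "x k \<in> {u. \<Psi> u + ereal (\<Phi> u) \<le> ereal (m + e)}" by simp
    qed
    thus ?thesis using w by auto
  qed
  have "\<Psi> w \<noteq> \<infinity>" using wle[of 1] by auto
  hence fw: "\<Psi> w = ereal (\<psi> w)" by (rule fin_of_ninf)
  have "\<psi> w + \<Phi> w \<le> m"
  proof (rule field_le_epsilon)
    fix e :: real assume "e > 0"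
    thus "\<psi> w + \<Phi> w \<le> m + e" using wle[of e] fw by simp
  qed
  hence "\<Psi> w + ereal (\<Phi> w) \<le> ereal m" using fw by simp
  thus ?thesis unfolding Sset_def using m_le order_trans by blast
qed

lemma INF_val: "(INF u. \<Psi> u + ereal (\<Phi> u)) = ereal m"
proof (rule antisym)
  have "(INF u. \<Psi> u + ereal (\<Phi> u)) \<le> \<Psi> z0 + ereal (\<Phi> z0)" by (rule INF_lower) simp
  also have "\<dots> = ereal m" using S_fin[OF z0S] by (simp add: m_def FF_def)
  finally show "(INF u. \<Psi> u + ereal (\<Phi> u)) \<le> ereal m" .
  show "ereal m \<le> (INF u. \<Psi> u + ereal (\<Phi> u))" by (rule INF_greatest) (rule m_le)
qed

lemma main:
  shows "((\<lambda>k. ereal ((real k)^2) *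
             ((\<Psi> (x k) + ereal (\<Phi> (x k))) - (INF u. \<Psi> u + ereal (\<Phi> u)))) \<longlonglongrightarrow> 0)
       \<and> ((\<lambda>k. real k * norm (x (k + 1) - x k)) \<longlonglongrightarrow> 0)
       \<and> (\<exists>z. (\<forall>u. \<Psi> z + ereal (\<Phi> z) \<le> \<Psi> u + ereal (\<Phi> u)) \<and> weakly_converges x z)"
proof (intro conjI)
  have "(\<lambda>k. ereal ((real k)^2 * W k)) \<longlonglongrightarrow> ereal 0" by (intro tendsto_ereal k2W_lim)
  hence lim0: "(\<lambda>k. ereal ((real k)^2 * W k)) \<longlonglongrightarrow> 0" by (simp add: zero_ereal_def)
  have ev: "eventually (\<lambda>k. ereal ((real k)^2 * W k) = ereal ((real k)^2) *
             ((\<Psi> (x k) + ereal (\<Phi> (x k))) - (INF u. \<Psi> u + ereal (\<Phi> u)))) sequentially"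
    using eventually_ge_at_top[of "2::nat"]
  proof eventually_elim
    case (elim k)
    show ?case using xfin[OF elim] by (simp add: INF_val W_def FF_def)
  qed
  show "(\<lambda>k. ereal ((real k)^2) *
             ((\<Psi> (x k) + ereal (\<Phi> (x k))) - (INF u. \<Psi> u + ereal (\<Phi> u)))) \<longlonglongrightarrow> 0"
    by (rule Lim_transform_eventually[OF lim0 ev])
  show "(\<lambda>k. real k * norm (x (k + 1) - x k)) \<longlonglongrightarrow> 0" by (rule kDs_lim)
  obtain Xb where Xb: "\<And>k. k \<ge> 2 \<Longrightarrow> norm (x k - z0) \<le> Xb" using xbdd by blast
  define M where "M = Xb + norm z0 + norm (x 0) + norm (x 1)"
  have bdd: "norm (x k) \<le> M" for k
  proof (cases "k \<ge> 2")
    case True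
    have "norm (x k) \<le> norm (x k - z0) + norm z0" by (metis norm_triangle_sub add.commute)
    thus ?thesis using Xb[OF True] norm_ge_zero[of "x 0"] norm_ge_zero[of "x 1"] unfolding M_def by linarith
  next
    case False
    hence "k = 0 \<or> k = 1" by auto
    moreover have "0 \<le> Xb" using Xb[of 2] by (meson norm_ge_zero order_trans order_refl)
    ultimately show ?thesis by (auto simp: M_def)
  qed
  have "\<exists>z\<in>Sset. weakly_converges x z"
    by (rule weak_conv_abstract[OF bdd norm_conv]) (use cluster in blast)+
  thus "\<exists>z. (\<forall>u. \<Psi> z + ereal (\<Phi> z) \<le> \<Psi> u + ereal (\<Phi> u)) \<and> weakly_converges x z"
    by (auto simp: Sset_def)
qed

end

theorem theorem3:
  fixes \<Psi> :: "'a::{real_inner, complete_space} \<Rightarrow> ereal"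
    and \<Phi> :: "'a \<Rightarrow> real" and gradPhi :: "'a \<Rightarrow> 'a"
    and L s \<alpha> :: real
    and x g :: "nat \<Rightarrow> 'a"
  assumes proper: "proper_fun \<Psi>" and lsc: "lsc_fun \<Psi>" and cvxPsi: "convex_ereal_fun \<Psi>"
    and cvxPhi: "convex_on UNIV \<Phi>"
    and grad: "\<And>u. (\<Phi> has_derivative (\<lambda>h. gradPhi u \<bullet> h)) (at u)"
    and grad_cont: "continuous_on UNIV gradPhi"
    and L_pos: "L > 0"
    and Lip: "\<And>u v. norm (gradPhi u - gradPhi v) \<le> L * norm (u - v)"
    and S_nonempty: "\<exists>z. \<forall>u. \<Psi> z + ereal (\<Phi> z) \<le> \<Psi> u + ereal (\<Phi> u)"
    and alpha: "\<alpha> > 3"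
    and s: "0 < s" "s < 1 / L"
    and scheme: "\<And>k. k \<ge> 1 \<Longrightarrow>
        (let y = x k + ((real k - 1) / (real k + \<alpha> - 1)) *\<^sub>R (x k - x (k - 1))
         in x (k + 1) = prox s \<Psi> (y - s *\<^sub>R (gradPhi y - g k)))"
    and err: "summable (\<lambda>k. real k * norm (g k))"
  shows "((\<lambda>k. ereal ((real k)^2) *
             ((\<Psi> (x k) + ereal (\<Phi> (x k))) - (INF u. \<Psi> u + ereal (\<Phi> u)))) \<longlonglongrightarrow> 0)
       \<and> ((\<lambda>k. real k * norm (x (k + 1) - x k)) \<longlonglongrightarrow> 0)
       \<and> (\<exists>z. (\<forall>u. \<Psi> z + ereal (\<Phi> z) \<le> \<Psi> u + ereal (\<Phi> u)) \<and> weakly_converges x z)"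
proof -
  interpret fista \<Psi> \<Phi> gradPhi L s \<alpha> x g
    by (rule fista.intro[OF proper lsc cvxPsi cvxPhi grad L_pos Lip S_nonempty alpha s(1) s(2) scheme err])
  show ?thesis by (rule main)
qed

end
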